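(* Let $k,s\in\mathbb{R}$ with $\max\{0,s\}<2k+1/2$ and $s\le k+1/2$. Let $b>1/2$ and $\max\{1/4,\ \max\{0,s\}-2k\}<a<1/2$. Then there is a constant $C$ such that for all $u,w\in X^{k,b}$, $$\|u\bar w\|_{H^{-a}_tH^s_x}\le C\|u\|_{X^{k,b}}\|w\|_{X^{k,b}}.$$
   Context: Functions are on $\mathbb{R}_x\times\mathbb{R}_t$; $\widehat f$ is the space-time Fourier transform, $\langle x\rangle=1+|x|$. $\|f\|_{X^{s,b}}=\big(\int\langle\xi\rangle^{2s}\langle\tau+\tfrac12\xi^2\rangle^{2b}|\widehat f(\xi,\tau)|^2d\xi d\tau\big)^{1/2}$, $\|f\|_{H^b_tH^s_x}=\big(\int\langle\xi\rangle^{2s}\langle\tau\rangle^{2b}|\widehat f(\xi,\tau)|^2d\xi d\tau\big)^{1/2}$. *)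

theory Defs
  imports "HOL-Analysis.Analysis"
begin

text \<open>Everything is expressed on the Fourier side: a space-time function/distribution
  u is represented by its space-time Fourier transform U = hat u :: real*real => complex,
  with first coordinate the spatial frequency xi and second the time frequency tau.\<close>

definition jbr :: "real \<Rightarrow> real" where
  "jbr x = 1 + \<bar>x\<bar>"

definition Xsb_sq :: "real \<Rightarrow> real \<Rightarrow> (real \<times> real \<Rightarrow> complex) \<Rightarrow> ennreal" where
  "Xsb_sq sx b U = (\<integral>\<^sup>+ p. (ennreal ((jbr (fst p) powr (2 * sx)) * (jbr (snd p + (fst p)^2 / 2) powr (2 * b))
                      * (cmod (U p))^2)) \<partial>lborel)"

definition HbHs_sq :: "real \<Rightarrow> real \<Rightarrow> (real \<times> real \<Rightarrow> complex) \<Rightarrow> ennreal" where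
  "HbHs_sq b sx U = (\<integral>\<^sup>+ p. (ennreal ((jbr (fst p) powr (2 * sx)) * (jbr (snd p) powr (2 * b))
                      * (cmod (U p))^2)) \<partial>lborel)"

definition in_Xsb :: "real \<Rightarrow> real \<Rightarrow> (real \<times> real \<Rightarrow> complex) \<Rightarrow> bool" where
  "in_Xsb s b U \<longleftrightarrow> U \<in> borel_measurable lborel \<and> Xsb_sq s b U < \<infinity>"

definition Xsb_norm :: "real \<Rightarrow> real \<Rightarrow> (real \<times> real \<Rightarrow> complex) \<Rightarrow> real" where
  "Xsb_norm s b U = sqrt (enn2real (Xsb_sq s b U))"

definition HbHs_norm :: "real \<Rightarrow> real \<Rightarrow> (real \<times> real \<Rightarrow> complex) \<Rightarrow> real" where
  "HbHs_norm b s U = sqrt (enn2real (HbHs_sq b s U))"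

text \<open>Fourier transform of the product u * conj w, given hat u = U, hat w = W
  (up to the normalising constant of the Fourier transform, which is absorbed in C):
  hat(u conj w)(p) = int U(q) conj(W(q - p)) dq.\<close>
definition prod_conj_FT :: "(real \<times> real \<Rightarrow> complex) \<Rightarrow> (real \<times> real \<Rightarrow> complex) \<Rightarrow> (real \<times> real \<Rightarrow> complex)" where
  "prod_conj_FT U W = (\<lambda>p. \<integral> q. U q * cnj (W (q - p)) \<partial>lborel)"

end

theory Submission
  imports Defs
begin
lemma jbr_ge1: "jbr x \<ge> 1" by (simp add: jbr_def)
lemma jbr_pos: "jbr x > 0" by (simp add: jbr_def)
lemma jbr_nn: "jbr x \<ge> 0" by (simp add: jbr_def)
lemma jbr_minus: "jbr (- x) = jbr x" by (simp add: jbr_def)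
lemma jbr_diff_comm: "jbr (x - y) = jbr (y - x)" by (simp add: jbr_def abs_minus_commute)
lemma jbr_add_le: "jbr (x + y) \<le> jbr x * jbr y"
proof -
  have "\<bar>x + y\<bar> \<le> \<bar>x\<bar> + \<bar>y\<bar>" by (rule abs_triangle_ineq)
  also have "\<dots> \<le> \<bar>x\<bar> + (\<bar>y\<bar> + \<bar>x\<bar> * \<bar>y\<bar>)" by simp
  finally have "\<bar>x + y\<bar> \<le> \<bar>x\<bar> + (\<bar>y\<bar> + \<bar>x\<bar> * \<bar>y\<bar>)" .
  then show ?thesis unfolding jbr_def by (simp add: algebra_simps)
qed
lemma jbr_diff_le: "jbr (x - y) \<le> jbr x * jbr y"
  using jbr_add_le[of x "-y"] by (simp add: jbr_minus)
lemma jbr_mono: "\<bar>x\<bar> \<le> \<bar>y\<bar> \<Longrightarrow> jbr x \<le> jbr y" by (simp add: jbr_def)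
lemma jbr_meas[measurable]: "jbr \<in> borel_measurable borel"
  unfolding jbr_def by measurable

lemma jbr_powr_le1: "e \<le> 0 \<Longrightarrow> jbr x powr e \<le> 1"
  using powr_mono[of e 0 "jbr x"] jbr_ge1[of x] by simp

lemma jbr_powr_pos: "jbr x powr e > 0" using jbr_pos[of x] by simp

lemma jbr_powr_anti: "e \<le> 0 \<Longrightarrow> \<bar>x\<bar> \<le> \<bar>y\<bar> \<Longrightarrow> jbr y powr e \<le> jbr x powr e"
  by (rule powr_mono2') (auto simp: jbr_pos jbr_mono)

lemma jbr_powr_mono: "e \<ge> 0 \<Longrightarrow> \<bar>x\<bar> \<le> \<bar>y\<bar> \<Longrightarrow> jbr x powr e \<le> jbr y powr e"
  by (rule powr_mono2) (auto simp: jbr_nn jbr_mono)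

definition Ij :: "real \<Rightarrow> ennreal" where
  "Ij p = (\<integral>\<^sup>+x. ennreal (jbr x powr (-p)) \<partial>lborel)"

lemma Ij_fin: assumes "p > 1" shows "Ij p < \<infinity>"
proof -
  have hi: "((\<lambda>x. x powr (-p)) has_integral -(1 powr (-p+1)) / (-p+1)) {1..}"
    by (rule has_integral_powr_to_inf) (use assms in auto)
  have i1: "(\<integral>\<^sup>+x. ennreal (x powr (-p)) * indicator {1..} x \<partial>lborel) = ennreal (-(1 powr (-p+1)) / (-p+1))"
    by (rule nn_integral_has_integral_lebesgue'[OF _ hi]) simp
  have i2: "(\<integral>\<^sup>+x. ennreal ((-x) powr (-p)) * indicator {..-1} x \<partial>lborel)
      = (\<integral>\<^sup>+x. ennreal (x powr (-p)) * indicator {1..} x \<partial>lborel)"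
  proof -
    have "(\<integral>\<^sup>+x. ennreal ((-x) powr (-p)) * indicator {..-1} x \<partial>lborel)
      = ennreal \<bar>-1\<bar> * (\<integral>\<^sup>+x. ennreal ((-(0 + (-1)*x)) powr (-p)) * indicator {..-1} (0 + (-1)*x) \<partial>lborel)"
      by (rule nn_integral_real_affine) auto
    also have "\<dots> = (\<integral>\<^sup>+x. ennreal (x powr (-p)) * indicator {1..} x \<partial>lborel)"
      by (auto intro!: nn_integral_cong simp: indicator_def)
    finally show ?thesis .
  qed
  have pw: "ennreal (jbr x powr (-p)) \<le> indicator {-1..1} x + ennreal (x powr (-p)) * indicator {1..} x
     + ennreal ((-x) powr (-p)) * indicator {..-1} x" for x
  proof (cases "\<bar>x\<bar> \<le> 1")
    case True
    then have "jbr x powr (-p) \<le> 1" using jbr_powr_le1[of "-p" x] assms by simp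
    then show ?thesis using True by (simp add: indicator_def add_increasing2)
  next
    case False
    show ?thesis
    proof (cases "x \<ge> 1")
      case True
      have "jbr x powr (-p) \<le> x powr (-p)"
        using True assms by (intro powr_mono2') (auto simp: jbr_def)
      then show ?thesis using True False by (simp add: indicator_def)
    next
      case F2: False
      then have "x \<le> -1" using False by auto
      have "jbr x powr (-p) \<le> (-x) powr (-p)"
        using \<open>x \<le> -1\<close> assms by (intro powr_mono2') (auto simp: jbr_def)
      then show ?thesis using \<open>x \<le> -1\<close> False by (auto simp: indicator_def)
    qed
  qed
  let ?A = "\<lambda>x::real. indicator {-1..1} x :: ennreal"
  let ?B = "\<lambda>x::real. ennreal (x powr (-p)) * indicator {1..} x"
  let ?C = "\<lambda>x::real. ennreal ((-x) powr (-p)) * indicator {..-1} x"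
  have "Ij p \<le> (\<integral>\<^sup>+x. ?A x + ?B x + ?C x \<partial>lborel)"
    unfolding Ij_def by (rule nn_integral_mono) (rule pw)
  also have "\<dots> = (\<integral>\<^sup>+x. ?A x \<partial>lborel) + (\<integral>\<^sup>+x. ?B x \<partial>lborel) + (\<integral>\<^sup>+x. ?C x \<partial>lborel)"
  proof -
    have mA: "?A \<in> borel_measurable lborel" by measurable
    have mB: "?B \<in> borel_measurable lborel" by measurable
    have mC: "?C \<in> borel_measurable lborel" by measurable
    have "(\<integral>\<^sup>+x. ?A x + ?B x + ?C x \<partial>lborel) = (\<integral>\<^sup>+x. ?A x + ?B x \<partial>lborel) + (\<integral>\<^sup>+x. ?C x \<partial>lborel)"
      by (rule nn_integral_add) (use mA mB mC in auto)
    also have "(\<integral>\<^sup>+x. ?A x + ?B x \<partial>lborel) = (\<integral>\<^sup>+x. ?A x \<partial>lborel) + (\<integral>\<^sup>+x. ?B x \<partial>lborel)"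
      by (rule nn_integral_add) (use mA mB in auto)
    finally show ?thesis .
  qed
  also have "\<dots> = 2 + 2 * ennreal (-(1 powr (-p+1)) / (-p+1))"
  proof -
    have "(\<integral>\<^sup>+x. ?A x \<partial>lborel) = 2" by simp
    then show ?thesis using i1 i2 by (simp add: mult_2)
  qed
  finally show ?thesis by (auto simp: ennreal_mult_less_top order_le_less_trans)
qed

lemma Ij_shift: "(\<integral>\<^sup>+x. ennreal (jbr (x - c) powr (-p)) \<partial>lborel) = Ij p"
proof -
  have "Ij p = ennreal \<bar>1\<bar> * (\<integral>\<^sup>+x. ennreal (jbr (-c + 1 * x) powr (-p)) \<partial>lborel)"
    unfolding Ij_def by (rule nn_integral_real_affine) auto
  then show ?thesis by simp
qed

lemma Ij_shift': "(\<integral>\<^sup>+x. ennreal (jbr (c - x) powr (-p)) \<partial>lborel) = Ij p"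
  using Ij_shift[of c p] by (simp add: jbr_diff_comm)

lemma Ij_affine: assumes "c \<noteq> 0"
  shows "ennreal \<bar>c\<bar> * (\<integral>\<^sup>+x. ennreal (jbr (d + c * x) powr (-p)) \<partial>lborel) = Ij p"
  unfolding Ij_def by (rule nn_integral_real_affine[symmetric]) (use assms in auto)

lemma inv_powr_bound:
  fixes B D q :: real
  assumes "0 < D" "0 < B" "D \<le> 2 * B" "0 \<le> q"
  shows "B powr (-q) \<le> 2 powr q * D powr (-q)"
proof -
  have "D powr q \<le> (2 * B) powr q" using assms by (intro powr_mono2) auto
  also have "\<dots> = 2 powr q * B powr q" using assms by (simp add: powr_mult)
  finally have h: "D powr q \<le> 2 powr q * B powr q" .
  have "B powr (-q) = 1 / B powr q" by (simp add: powr_minus divide_inverse)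
  also have "\<dots> \<le> 2 powr q / D powr q"
    using h assms by (simp add: divide_simps mult.commute)
  also have "\<dots> = 2 powr q * D powr (-q)" by (simp add: powr_minus divide_inverse)
  finally show ?thesis .
qed

lemma conv_pw:
  assumes "0 \<le> q" "q \<le> p"
  shows "jbr (x - \<alpha>) powr (-p) * jbr (x - \<beta>) powr (-q)
     \<le> 2 powr q * jbr (\<alpha> - \<beta>) powr (-q) * (jbr (x - \<alpha>) powr (-p) + jbr (x - \<beta>) powr (-p))"
proof -
  define A where "A = jbr (x - \<alpha>)"
  define B where "B = jbr (x - \<beta>)"
  define D where "D = jbr (\<alpha> - \<beta>)"
  have A1: "A \<ge> 1" and B1: "B \<ge> 1" and D1: "D \<ge> 1" unfolding A_def B_def D_def by (auto simp: jbr_ge1)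
  have "\<bar>\<alpha> - \<beta>\<bar> \<le> \<bar>x - \<alpha>\<bar> + \<bar>x - \<beta>\<bar>" by linarith
  then have DAB: "D \<le> A + B" unfolding A_def B_def D_def jbr_def by linarith
  have c: "0 \<le> 2 powr q * D powr (-q)" by simp
  show ?thesis
  proof (cases "A \<le> B")
    case True
    then have "D \<le> 2 * B" using DAB by linarith
    then have "B powr (-q) \<le> 2 powr q * D powr (-q)"
      using inv_powr_bound[of D B q] A1 B1 D1 assms by auto
    then have "A powr (-p) * B powr (-q) \<le> A powr (-p) * (2 powr q * D powr (-q))"
      by (intro mult_left_mono) auto
    also have "\<dots> \<le> 2 powr q * D powr (-q) * (A powr (-p) + B powr (-p))"
      by (simp add: algebra_simps add_increasing2 c)
    finally show ?thesis unfolding A_def B_def D_def .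
  next
    case False
    then have "D \<le> 2 * A" using DAB by linarith
    then have h1: "A powr (-q) \<le> 2 powr q * D powr (-q)"
      using inv_powr_bound[of D A q] A1 B1 D1 assms by auto
    have h2: "A powr (q - p) \<le> B powr (q - p)"
      using False assms B1 by (intro powr_mono2') auto
    have "A powr (-p) * B powr (-q) = A powr (-q) * (A powr (q - p) * B powr (-q))"
      by (simp add: powr_add[symmetric])
    also have "\<dots> \<le> (2 powr q * D powr (-q)) * (B powr (q - p) * B powr (-q))"
      using h1 h2 by (intro mult_mono) auto
    also have "B powr (q - p) * B powr (-q) = B powr (-p)" by (simp add: powr_add[symmetric])
    also have "2 powr q * D powr (-q) * B powr (-p) \<le> 2 powr q * D powr (-q) * (A powr (-p) + B powr (-p))"
      by (intro mult_left_mono) auto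
    finally show ?thesis unfolding A_def B_def D_def .
  qed
qed

lemma conv_bound:
  assumes "1 < p" "0 \<le> q" "q \<le> p"
  shows "(\<integral>\<^sup>+x. ennreal (jbr (x - \<alpha>) powr (-p) * jbr (x - \<beta>) powr (-q)) \<partial>lborel)
      \<le> ennreal (2 powr q * jbr (\<alpha> - \<beta>) powr (-q)) * (2 * Ij p)"
proof -
  define c where "c = 2 powr q * jbr (\<alpha> - \<beta>) powr (-q)"
  have c0: "c \<ge> 0" unfolding c_def by simp
  have "(\<integral>\<^sup>+x. ennreal (jbr (x - \<alpha>) powr (-p) * jbr (x - \<beta>) powr (-q)) \<partial>lborel)
     \<le> (\<integral>\<^sup>+x. ennreal c * (ennreal (jbr (x - \<alpha>) powr (-p)) + ennreal (jbr (x - \<beta>) powr (-p))) \<partial>lborel)"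
    apply (rule nn_integral_mono)
    subgoal for x
    using conv_pw[OF assms(2,3), of x \<alpha> \<beta>] c0
    by (simp add: c_def ennreal_mult'[symmetric] ennreal_plus[symmetric] del: ennreal_plus)
    done
  also have "\<dots> = ennreal c * ((\<integral>\<^sup>+x. ennreal (jbr (x - \<alpha>) powr (-p)) \<partial>lborel) + (\<integral>\<^sup>+x. ennreal (jbr (x - \<beta>) powr (-p)) \<partial>lborel))"
  proof -
    have m1: "(\<lambda>x. ennreal (jbr (x - \<alpha>) powr (-p))) \<in> borel_measurable lborel" by measurable
    have m2: "(\<lambda>x. ennreal (jbr (x - \<beta>) powr (-p))) \<in> borel_measurable lborel" by measurable
    have "(\<integral>\<^sup>+x. ennreal c * (ennreal (jbr (x - \<alpha>) powr (-p)) + ennreal (jbr (x - \<beta>) powr (-p))) \<partial>lborel)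
       = ennreal c * (\<integral>\<^sup>+x. (ennreal (jbr (x - \<alpha>) powr (-p)) + ennreal (jbr (x - \<beta>) powr (-p))) \<partial>lborel)"
      by (rule nn_integral_cmult) (intro borel_measurable_add m1 m2)
    also have "(\<integral>\<^sup>+x. (ennreal (jbr (x - \<alpha>) powr (-p)) + ennreal (jbr (x - \<beta>) powr (-p))) \<partial>lborel)
       = (\<integral>\<^sup>+x. ennreal (jbr (x - \<alpha>) powr (-p)) \<partial>lborel) + (\<integral>\<^sup>+x. ennreal (jbr (x - \<beta>) powr (-p)) \<partial>lborel)"
      by (rule nn_integral_add) (use m1 m2 in auto)
    finally show ?thesis .
  qed
  also have "\<dots> = ennreal c * (2 * Ij p)" by (simp add: Ij_shift mult_2)
  finally show ?thesis unfolding c_def .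
qed

lemma ennreal_mult_le_mono: "a \<le> b \<Longrightarrow> (c::ennreal) * a \<le> c * b"
  by (rule mult_left_mono) auto

lemma lin_bound:
  assumes e0: "0 \<le> e" and e1: "e \<le> 1" and p1: "1 < p"
  shows "(\<integral>\<^sup>+x. ennreal (indicator {-1..1} x * jbr (c - x*y) powr (-e)) \<partial>lborel)
     \<le> ennreal (jbr y powr (p - 1 - e)) * (4 * (Ij p + 2))"
proof -
  define L where "L = (\<integral>\<^sup>+x. ennreal (indicator {-1..1} x * jbr (c - x*y) powr (-e)) \<partial>lborel)"
  have Lle2: "L \<le> 2"
  proof -
    have "L \<le> (\<integral>\<^sup>+x. ennreal (indicator {-1..1::real} x) \<partial>lborel)"
      unfolding L_def
      apply (rule nn_integral_mono)
      subgoal for x using jbr_powr_le1[of "-e" "c - x*y"] e0 by (intro ennreal_leI) (auto simp: indicator_def)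
      done
    also have "\<dots> = 2" by (simp add: ennreal_indicator nn_integral_indicator)
    finally show ?thesis .
  qed
  have Ij0: "Ij p + 2 \<ge> 2" by (simp add: add_increasing)
  show ?thesis
  proof (cases "\<bar>y\<bar> \<le> 1")
    case True
    have "jbr y \<le> 2" using True by (simp add: jbr_def)
    have "jbr y powr (-1) \<le> jbr y powr (p - 1 - e)"
      using jbr_ge1[of y] e1 p1 by (intro powr_mono) auto
    moreover have "jbr y powr (-1) \<ge> 1/2"
      using \<open>jbr y \<le> 2\<close> jbr_pos[of y] by (simp add: powr_minus divide_simps)
    ultimately have hz: "jbr y powr (p - 1 - e) \<ge> 1/2" by linarith
    define z where "z = jbr y powr (p - 1 - e)"
    have z0: "z \<ge> 0" unfolding z_def by simp
    have "(2::real) \<le> z * 4 * 2" using hz unfolding z_def by linarith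
    then have "ennreal 2 \<le> ennreal (z * 4 * 2)" by (rule ennreal_leI)
    also have "\<dots> = ennreal (z * 4) * 2" using z0 by (simp add: ennreal_mult mult_ac)
    also have "\<dots> \<le> ennreal (z * 4) * (Ij p + 2)" using Ij0 by (intro mult_left_mono) auto
    also have "\<dots> = ennreal z * (4 * (Ij p + 2))" using z0 by (simp add: ennreal_mult mult.assoc)
    finally show ?thesis using Lle2 unfolding L_def z_def by simp
  next
    case False
    define N where "N = \<bar>y\<bar>"
    have N1: "N > 1" using False by (simp add: N_def)
    define f where "f \<mu> = ennreal (indicator {-N..N} \<mu> * jbr (c - \<mu>) powr (-e))" for \<mu>
    have fm: "f \<in> borel_measurable borel" unfolding f_def by measurable
    have y0: "y \<noteq> 0" using N1 N_def by auto
    have aff: "(\<integral>\<^sup>+\<mu>. f \<mu> \<partial>lborel) = ennreal \<bar>y\<bar> * (\<integral>\<^sup>+x. f (0 + y * x) \<partial>lborel)"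
      by (rule nn_integral_real_affine[OF fm y0])
    have fyx: "f (0 + y * x) = ennreal (indicator {-1..1} x * jbr (c - x*y) powr (-e))" for x
    proof -
      have "(y * x \<in> {-N..N}) = (\<bar>y * x\<bar> \<le> N)" by (auto simp: abs_le_iff)
      also have "\<dots> = (\<bar>y\<bar> * \<bar>x\<bar> \<le> \<bar>y\<bar> * 1)" by (simp add: N_def abs_mult)
      also have "\<dots> = (\<bar>x\<bar> \<le> 1)" using N1 unfolding N_def by (intro mult_le_cancel_left_pos) auto
      also have "\<dots> = (x \<in> {-1..1})" by (auto simp: abs_le_iff)
      finally have "(y * x \<in> {-N..N}) = (x \<in> {-1..1})" .
      then show ?thesis unfolding f_def by (simp add: indicator_def mult.commute)
    qed
    have intf: "(\<integral>\<^sup>+\<mu>. f \<mu> \<partial>lborel) = ennreal N * L"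
      unfolding aff fyx L_def N_def by simp
    define P where "P = (1 + N) powr (p - e)"
    define Q where "Q = (1 + N) powr (-e)"
    have P0: "P \<ge> 0" "Q \<ge> 0" unfolding P_def Q_def by auto
    have fpw: "f \<mu> \<le> ennreal P * ennreal (jbr (c - \<mu>) powr (-p)) + ennreal Q * indicator {-N..N} \<mu>" for \<mu>
    proof (cases "\<bar>c - \<mu>\<bar> \<le> N")
      case True
      have j: "jbr (c - \<mu>) \<le> 1 + N" using True by (simp add: jbr_def)
      have "jbr (c - \<mu>) powr (-e) = jbr (c - \<mu>) powr (p - e) * jbr (c - \<mu>) powr (-p)"
        by (simp add: powr_add[symmetric])
      also have "\<dots> \<le> P * jbr (c - \<mu>) powr (-p)"
        unfolding P_def using j e1 p1 jbr_nn[of "c - \<mu>"] by (intro mult_right_mono powr_mono2) auto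
      finally have "indicator {-N..N} \<mu> * jbr (c - \<mu>) powr (-e) \<le> P * jbr (c - \<mu>) powr (-p)"
        using P0 by (auto simp: indicator_def)
      then have "f \<mu> \<le> ennreal (P * jbr (c - \<mu>) powr (-p))" unfolding f_def by (rule ennreal_leI)
      also have "\<dots> \<le> ennreal P * ennreal (jbr (c - \<mu>) powr (-p)) + ennreal Q * indicator {-N..N} \<mu>"
        using P0 by (simp add: ennreal_mult)
      finally show ?thesis .
    next
      case False
      have j: "jbr (c - \<mu>) \<ge> 1 + N" using False by (simp add: jbr_def)
      have "jbr (c - \<mu>) powr (-e) \<le> Q" unfolding Q_def using j e0 N1 by (intro powr_mono2') auto
      then have "indicator {-N..N} \<mu> * jbr (c - \<mu>) powr (-e) \<le> Q * indicator {-N..N} \<mu>"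
        using P0 by (auto simp: indicator_def)
      then have "f \<mu> \<le> ennreal (Q * indicator {-N..N} \<mu>)" unfolding f_def by (rule ennreal_leI)
      also have "\<dots> = ennreal Q * indicator {-N..N} \<mu>"
        using P0 by (simp add: ennreal_mult indicator_def)
      also have "\<dots> \<le> ennreal P * ennreal (jbr (c - \<mu>) powr (-p)) + ennreal Q * indicator {-N..N} \<mu>"
        by simp
      finally show ?thesis .
    qed
    have m1: "(\<lambda>\<mu>. ennreal P * ennreal (jbr (c - \<mu>) powr (-p))) \<in> borel_measurable lborel" by measurable
    have m2: "(\<lambda>\<mu>. ennreal Q * (indicator {-N..N} \<mu> :: ennreal)) \<in> borel_measurable lborel" by measurable
    have "ennreal N * L \<le> (\<integral>\<^sup>+\<mu>. ennreal P * ennreal (jbr (c - \<mu>) powr (-p)) + ennreal Q * indicator {-N..N} \<mu> \<partial>lborel)"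
      unfolding intf[symmetric] by (rule nn_integral_mono) (rule fpw)
    also have "\<dots> = (\<integral>\<^sup>+\<mu>. ennreal P * ennreal (jbr (c - \<mu>) powr (-p)) \<partial>lborel) + (\<integral>\<^sup>+\<mu>. ennreal Q * indicator {-N..N} \<mu> \<partial>lborel)"
      by (rule nn_integral_add) (use m1 m2 in auto)
    also have "(\<integral>\<^sup>+\<mu>. ennreal P * ennreal (jbr (c - \<mu>) powr (-p)) \<partial>lborel) = ennreal P * Ij p"
      by (subst nn_integral_cmult) (auto simp: Ij_shift')
    also have "(\<integral>\<^sup>+\<mu>. ennreal Q * indicator {-N..N} \<mu> \<partial>lborel) = ennreal Q * ennreal (2 * N)"
      using N1 by (subst nn_integral_cmult) auto
    also have "ennreal Q * ennreal (2 * N) \<le> ennreal P * 2"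
    proof -
      have "Q * N \<le> (1 + N) powr (-e) * (1 + N)" unfolding Q_def using N1 by (intro mult_left_mono) auto
      also have "\<dots> = (1 + N) powr (-e) * (1 + N) powr 1" using N1 by simp
      also have "\<dots> = (1 + N) powr (-e + 1)" by (subst powr_add) (rule refl)
      also have "\<dots> = (1 + N) powr (1 - e)" by simp
      also have "\<dots> \<le> P" unfolding P_def using N1 p1 by (intro powr_mono) auto
      finally have "Q * (2 * N) \<le> P * 2" by linarith
      then have "ennreal (Q * (2 * N)) \<le> ennreal (P * 2)" by (rule ennreal_leI)
      moreover have "ennreal Q * ennreal (2 * N) = ennreal (Q * (2 * N))" using P0 N1 by (simp add: ennreal_mult)
      moreover have "ennreal (P * 2) = ennreal P * 2" using P0 by (simp add: ennreal_mult)
      ultimately show ?thesis by simp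
    qed
    finally have NL: "ennreal N * L \<le> ennreal P * (Ij p + 2)"
      by (simp add: distrib_left add_left_mono)
    have "L = ennreal (1 / N) * (ennreal N * L)"
    proof -
      have "ennreal (1 / N) * ennreal N = 1" using N1 by (subst ennreal_mult[symmetric]) auto
      then show ?thesis by (simp add: mult.assoc[symmetric])
    qed
    also have "\<dots> \<le> ennreal (1 / N) * (ennreal P * (Ij p + 2))"
      by (rule ennreal_mult_le_mono[OF NL])
    also have "\<dots> = ennreal (P / N) * (Ij p + 2)"
      using N1 P0 by (simp add: mult.assoc[symmetric] ennreal_mult[symmetric])
    also have "\<dots> \<le> ennreal (jbr y powr (p - 1 - e) * 4) * (Ij p + 2)"
    proof -
      have jy: "jbr y = 1 + N" by (simp add: jbr_def N_def)
      have "(1 + N) powr (p - 1 - e) * (1 + N) = (1 + N) powr (p - 1 - e) * (1 + N) powr 1" using N1 by simp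
      also have "\<dots> = (1 + N) powr (p - 1 - e + 1)" by (subst powr_add) (rule refl)
      also have "\<dots> = P" unfolding P_def by simp
      finally have "P = (1 + N) powr (p - 1 - e) * (1 + N)" by simp
      then have "P / N = (1 + N) powr (p - 1 - e) * ((1 + N) / N)" by simp
      also have "\<dots> \<le> (1 + N) powr (p - 1 - e) * 4"
        using N1 by (intro mult_left_mono) (auto simp: divide_simps)
      finally show ?thesis unfolding jy by (intro mult_right_mono ennreal_leI) auto
    qed
    finally show ?thesis unfolding L_def by (simp add: ennreal_mult mult.assoc)
  qed
qed

lemma sq3_real: "(a::real) \<ge> 0 \<Longrightarrow> b \<ge> 0 \<Longrightarrow> c \<ge> 0 \<Longrightarrow>
   (ennreal a + ennreal b + ennreal c)^2 \<le> 3 * ((ennreal a)^2 + (ennreal b)^2 + (ennreal c)^2)"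
proof -
  assume h: "a \<ge> 0" "b \<ge> 0" "c \<ge> 0"
  have r: "(a + b + c)^2 \<le> 3 * (a^2 + b^2 + c^2)"
  proof -
    have e: "(a+b+c)^2 = 3*(a^2+b^2+c^2) - ((a-b)^2 + (b-c)^2 + (a-c)^2)" by (simp add: power2_eq_square algebra_simps)
    have "0 \<le> (a-b)^2 + (b-c)^2 + (a-c)^2" by simp
    then show ?thesis using e by linarith
  qed
  have s1: "ennreal (a + b + c) = ennreal a + ennreal b + ennreal c" using h by simp
  have h3: "0 \<le> a + b + c" using h by simp
  have "(ennreal a + ennreal b + ennreal c)^2 = ennreal ((a + b + c)^2)"
    unfolding s1[symmetric] by (rule ennreal_power[OF h3])
  also have "\<dots> \<le> ennreal (3 * (a^2 + b^2 + c^2))" by (rule ennreal_leI[OF r])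
  also have "\<dots> = 3 * ((ennreal a)^2 + (ennreal b)^2 + (ennreal c)^2)"
  proof -
    have "ennreal (3 * (a^2 + b^2 + c^2)) = ennreal 3 * ennreal (a^2 + b^2 + c^2)"
      by (rule ennreal_mult) (auto)
    also have "ennreal (a^2 + b^2 + c^2) = ennreal (a^2) + ennreal (b^2) + ennreal (c^2)" by simp
    also have "ennreal (a^2) = (ennreal a)^2" using h by (simp add: ennreal_power)
    also have "ennreal (b^2) = (ennreal b)^2" using h by (simp add: ennreal_power)
    also have "ennreal (c^2) = (ennreal c)^2" using h by (simp add: ennreal_power)
    finally show ?thesis by simp
  qed
  finally show ?thesis .
qed
lemma sq3_ennreal: "((x::ennreal) + y + z)^2 \<le> 3 * (x^2 + y^2 + z^2)"
proof (cases "x = \<infinity> \<or> y = \<infinity> \<or> z = \<infinity>")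
  case True
  then have "x^2 + y^2 + z^2 = \<infinity>" by (auto simp: power2_eq_square)
  then have "3 * (x^2 + y^2 + z^2) = \<infinity>" by (simp only:) (simp add: ennreal_mult_top)
  then show ?thesis by (simp only:) simp
next
  case False
  then have "x \<noteq> \<infinity>" "y \<noteq> \<infinity>" "z \<noteq> \<infinity>" by auto
  then show ?thesis
    by (cases x rule: ennreal_cases; cases y rule: ennreal_cases; cases z rule: ennreal_cases) (simp_all only: sq3_real infinity_ennreal_def)
qed
lemma tr_lborel:
  fixes h :: "real \<times> real \<Rightarrow> ennreal"
  assumes [measurable]: "h \<in> borel_measurable borel"
  shows "(\<integral>\<^sup>+q. h q \<partial>lborel) = (\<integral>\<^sup>+r. h (p + r) \<partial>lborel)"
proof -
  have "(\<integral>\<^sup>+q. h q \<partial>lborel) = (\<integral>\<^sup>+q. h q \<partial>(distr lborel borel ((+) p)))"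
    by (simp add: lborel_distr_plus)
  also have "\<dots> = (\<integral>\<^sup>+r. h (p + r) \<partial>lborel)"
    by (subst nn_integral_distr) auto
  finally show ?thesis .
qed

lemma schur3:
  fixes f g w :: "real \<times> real \<Rightarrow> ennreal" and K KA KB KC :: "real \<times> real \<Rightarrow> real \<times> real \<Rightarrow> ennreal"
  assumes mf[measurable]: "f \<in> borel_measurable borel" and mg[measurable]: "g \<in> borel_measurable borel"
    and mw[measurable]: "w \<in> borel_measurable borel"
    and mK[measurable]: "case_prod K \<in> borel_measurable (lborel \<Otimes>\<^sub>M lborel)"
    and mKA[measurable]: "case_prod KA \<in> borel_measurable (lborel \<Otimes>\<^sub>M lborel)"
    and mKB[measurable]: "case_prod KB \<in> borel_measurable (lborel \<Otimes>\<^sub>M lborel)"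
    and mKC[measurable]: "case_prod KC \<in> borel_measurable (lborel \<Otimes>\<^sub>M lborel)"
    and Ksplit: "\<And>p q. K p q \<le> KA p q + KB p q + KC p q"
    and A: "\<And>p. w p * (\<integral>\<^sup>+q. (KA p q)^2 \<partial>lborel) \<le> CA"
    and B: "\<And>q. (\<integral>\<^sup>+p. w p * (KB p q)^2 \<partial>lborel) \<le> CB"
    and C: "\<And>r. (\<integral>\<^sup>+p. w p * (KC p (p + r))^2 \<partial>lborel) \<le> CC"
  shows "(\<integral>\<^sup>+p. w p * (\<integral>\<^sup>+q. f q * g (q - p) * K p q \<partial>lborel)^2 \<partial>lborel)
     \<le> 3 * (CA + CB + CC) * ((\<integral>\<^sup>+q. (f q)^2 \<partial>lborel) * (\<integral>\<^sup>+q. (g q)^2 \<partial>lborel))"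
proof -
  define Nf where "Nf = (\<integral>\<^sup>+q. (f q)^2 \<partial>lborel)"
  define Ng where "Ng = (\<integral>\<^sup>+q. (g q)^2 \<partial>lborel)"
  define FA where "FA p = (\<integral>\<^sup>+q. f q * g (q - p) * KA p q \<partial>lborel)" for p
  define FB where "FB p = (\<integral>\<^sup>+q. f q * g (q - p) * KB p q \<partial>lborel)" for p
  define FC where "FC p = (\<integral>\<^sup>+q. f q * g (q - p) * KC p q \<partial>lborel)" for p
  have mFA[measurable]: "FA \<in> borel_measurable lborel" unfolding FA_def by measurable
  have mFB[measurable]: "FB \<in> borel_measurable lborel" unfolding FB_def by measurable
  have mFC[measurable]: "FC \<in> borel_measurable lborel" unfolding FC_def by measurable
  have Fle: "(\<integral>\<^sup>+q. f q * g (q - p) * K p q \<partial>lborel) \<le> FA p + FB p + FC p" for p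
  proof -
    have "(\<integral>\<^sup>+q. f q * g (q - p) * K p q \<partial>lborel)
        \<le> (\<integral>\<^sup>+q. f q * g (q - p) * KA p q + f q * g (q - p) * KB p q + f q * g (q - p) * KC p q \<partial>lborel)"
    proof (rule nn_integral_mono)
      fix q
      have "f q * g (q - p) * K p q \<le> f q * g (q - p) * (KA p q + KB p q + KC p q)"
        by (rule mult_left_mono[OF Ksplit]) simp
      then show "f q * g (q - p) * K p q \<le> f q * g (q - p) * KA p q + f q * g (q - p) * KB p q + f q * g (q - p) * KC p q"
        by (simp add: distrib_left)
    qed
    also have "\<dots> = (\<integral>\<^sup>+q. f q * g (q - p) * KA p q + f q * g (q - p) * KB p q \<partial>lborel) + FC p"
      unfolding FC_def by (rule nn_integral_add) measurable
    also have "(\<integral>\<^sup>+q. f q * g (q - p) * KA p q + f q * g (q - p) * KB p q \<partial>lborel) = FA p + FB p"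
      unfolding FA_def FB_def by (rule nn_integral_add) measurable
    finally show ?thesis .
  qed
  have trg: "(\<integral>\<^sup>+q. (g (q - p))^2 \<partial>lborel) = Ng" for p
  proof -
    have "(\<integral>\<^sup>+q. (g (q - p))^2 \<partial>lborel) = (\<integral>\<^sup>+r. (g (p + r - p))^2 \<partial>lborel)"
      by (rule tr_lborel) measurable
    then show ?thesis unfolding Ng_def by simp
  qed
  have trf: "(\<integral>\<^sup>+p. (f (p + r))^2 \<partial>lborel) = Nf" for r
  proof -
    have "(\<integral>\<^sup>+q. (f q)^2 \<partial>lborel) = (\<integral>\<^sup>+p. (f (r + p))^2 \<partial>lborel)"
      by (rule tr_lborel) measurable
    then show ?thesis unfolding Nf_def by (simp add: add.commute)
  qed
  have IA: "(\<integral>\<^sup>+p. w p * (FA p)^2 \<partial>lborel) \<le> CA * (Nf * Ng)"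
  proof -
    have pA: "w p * (FA p)^2 \<le> CA * (\<integral>\<^sup>+q. (f q * g (q - p))^2 \<partial>lborel)" for p
    proof -
      have cs: "(FA p)^2 \<le> (\<integral>\<^sup>+q. (f q * g (q - p))^2 \<partial>lborel) * (\<integral>\<^sup>+q. (KA p q)^2 \<partial>lborel)"
        unfolding FA_def by (rule Cauchy_Schwarz_nn_integral) measurable
      have "w p * (FA p)^2 \<le> w p * ((\<integral>\<^sup>+q. (f q * g (q - p))^2 \<partial>lborel) * (\<integral>\<^sup>+q. (KA p q)^2 \<partial>lborel))"
        by (rule mult_left_mono[OF cs]) simp
      also have "\<dots> = (\<integral>\<^sup>+q. (f q * g (q - p))^2 \<partial>lborel) * (w p * (\<integral>\<^sup>+q. (KA p q)^2 \<partial>lborel))"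
        by (simp add: mult_ac)
      also have "\<dots> \<le> (\<integral>\<^sup>+q. (f q * g (q - p))^2 \<partial>lborel) * CA"
        by (rule mult_left_mono[OF A]) simp
      finally show ?thesis by (simp add: mult_ac)
    qed
    have trA: "(\<integral>\<^sup>+q. (f q * g (q - p))^2 \<partial>lborel) = (\<integral>\<^sup>+r. (f (p + r) * g r)^2 \<partial>lborel)" for p
    proof -
      have "(\<integral>\<^sup>+q. (f q * g (q - p))^2 \<partial>lborel) = (\<integral>\<^sup>+r. (f (p + r) * g (p + r - p))^2 \<partial>lborel)"
        by (rule tr_lborel) measurable
      then show ?thesis by simp
    qed
    have "(\<integral>\<^sup>+p. w p * (FA p)^2 \<partial>lborel) \<le> (\<integral>\<^sup>+p. CA * (\<integral>\<^sup>+r. (f (p + r) * g r)^2 \<partial>lborel) \<partial>lborel)"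
      by (rule nn_integral_mono) (use pA trA in simp)
    also have "\<dots> = CA * (\<integral>\<^sup>+p. (\<integral>\<^sup>+r. (f (p + r) * g r)^2 \<partial>lborel) \<partial>lborel)"
      by (rule nn_integral_cmult) measurable
    also have "(\<integral>\<^sup>+p. (\<integral>\<^sup>+r. (f (p + r) * g r)^2 \<partial>lborel) \<partial>lborel)
        = (\<integral>\<^sup>+r. (\<integral>\<^sup>+p. (f (p + r) * g r)^2 \<partial>lborel) \<partial>lborel)"
      by (rule lborel_pair.Fubini'[symmetric]) measurable
    also have "\<dots> = (\<integral>\<^sup>+r. (g r)^2 * Nf \<partial>lborel)"
    proof (rule nn_integral_cong)
      fix r
      have "(\<integral>\<^sup>+p. (f (p + r) * g r)^2 \<partial>lborel) = (\<integral>\<^sup>+p. (f (p + r))^2 * (g r)^2 \<partial>lborel)"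
        by (simp add: power_mult_distrib)
      also have "\<dots> = (\<integral>\<^sup>+p. (f (p + r))^2 \<partial>lborel) * (g r)^2"
        by (rule nn_integral_multc) measurable
      finally show "(\<integral>\<^sup>+p. (f (p + r) * g r)^2 \<partial>lborel) = (g r)^2 * Nf" using trf[of r] by (simp add: mult_ac)
    qed
    also have "\<dots> = Ng * Nf" unfolding Ng_def by (rule nn_integral_multc) measurable
    finally show ?thesis by (simp add: mult_ac)
  qed
  have IB: "(\<integral>\<^sup>+p. w p * (FB p)^2 \<partial>lborel) \<le> CB * (Nf * Ng)"
  proof -
    have pB: "w p * (FB p)^2 \<le> Ng * (\<integral>\<^sup>+q. w p * (f q * KB p q)^2 \<partial>lborel)" for p
    proof -
      have e: "FB p = (\<integral>\<^sup>+q. (f q * KB p q) * g (q - p) \<partial>lborel)" unfolding FB_def by (simp add: mult_ac)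
      have cs: "(FB p)^2 \<le> (\<integral>\<^sup>+q. (f q * KB p q)^2 \<partial>lborel) * (\<integral>\<^sup>+q. (g (q - p))^2 \<partial>lborel)"
        unfolding e by (rule Cauchy_Schwarz_nn_integral) measurable
      have "w p * (FB p)^2 \<le> w p * ((\<integral>\<^sup>+q. (f q * KB p q)^2 \<partial>lborel) * Ng)"
        using mult_left_mono[OF cs, of "w p"] trg[of p] by simp
      also have "\<dots> = Ng * (w p * (\<integral>\<^sup>+q. (f q * KB p q)^2 \<partial>lborel))" by (simp add: mult_ac)
      also have "w p * (\<integral>\<^sup>+q. (f q * KB p q)^2 \<partial>lborel) = (\<integral>\<^sup>+q. w p * (f q * KB p q)^2 \<partial>lborel)"
        by (rule nn_integral_cmult[symmetric]) measurable
      finally show ?thesis .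
    qed
    have "(\<integral>\<^sup>+p. w p * (FB p)^2 \<partial>lborel) \<le> (\<integral>\<^sup>+p. Ng * (\<integral>\<^sup>+q. w p * (f q * KB p q)^2 \<partial>lborel) \<partial>lborel)"
      by (rule nn_integral_mono) (rule pB)
    also have "\<dots> = Ng * (\<integral>\<^sup>+p. (\<integral>\<^sup>+q. w p * (f q * KB p q)^2 \<partial>lborel) \<partial>lborel)"
      by (rule nn_integral_cmult) measurable
    also have "(\<integral>\<^sup>+p. (\<integral>\<^sup>+q. w p * (f q * KB p q)^2 \<partial>lborel) \<partial>lborel)
        = (\<integral>\<^sup>+q. (\<integral>\<^sup>+p. w p * (f q * KB p q)^2 \<partial>lborel) \<partial>lborel)"
      by (rule lborel_pair.Fubini'[symmetric]) measurable
    also have "\<dots> \<le> (\<integral>\<^sup>+q. (f q)^2 * CB \<partial>lborel)"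
    proof (rule nn_integral_mono)
      fix q
      have "(\<integral>\<^sup>+p. w p * (f q * KB p q)^2 \<partial>lborel) = (\<integral>\<^sup>+p. (f q)^2 * (w p * (KB p q)^2) \<partial>lborel)"
        by (simp add: power_mult_distrib mult_ac)
      also have "\<dots> = (f q)^2 * (\<integral>\<^sup>+p. w p * (KB p q)^2 \<partial>lborel)"
        by (rule nn_integral_cmult) measurable
      also have "\<dots> \<le> (f q)^2 * CB" by (rule mult_left_mono[OF B]) simp
      finally show "(\<integral>\<^sup>+p. w p * (f q * KB p q)^2 \<partial>lborel) \<le> (f q)^2 * CB" .
    qed
    also have "\<dots> = Nf * CB" unfolding Nf_def by (rule nn_integral_multc) measurable
    finally have "(\<integral>\<^sup>+p. w p * (FB p)^2 \<partial>lborel) \<le> Ng * (Nf * CB)" by (simp add: mult_left_mono)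
    then show ?thesis by (simp add: mult_ac)
  qed
  have IC: "(\<integral>\<^sup>+p. w p * (FC p)^2 \<partial>lborel) \<le> CC * (Nf * Ng)"
  proof -
    have pC: "w p * (FC p)^2 \<le> Nf * (\<integral>\<^sup>+r. w p * (g r * KC p (p + r))^2 \<partial>lborel)" for p
    proof -
      have e: "FC p = (\<integral>\<^sup>+q. f q * (g (q - p) * KC p q) \<partial>lborel)" unfolding FC_def by (simp add: mult_ac)
      have cs: "(FC p)^2 \<le> (\<integral>\<^sup>+q. (f q)^2 \<partial>lborel) * (\<integral>\<^sup>+q. (g (q - p) * KC p q)^2 \<partial>lborel)"
        unfolding e by (rule Cauchy_Schwarz_nn_integral) measurable
      have tC: "(\<integral>\<^sup>+q. (g (q - p) * KC p q)^2 \<partial>lborel) = (\<integral>\<^sup>+r. (g r * KC p (p + r))^2 \<partial>lborel)"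
      proof -
        have "(\<integral>\<^sup>+q. (g (q - p) * KC p q)^2 \<partial>lborel) = (\<integral>\<^sup>+r. (g (p + r - p) * KC p (p + r))^2 \<partial>lborel)"
          by (rule tr_lborel) measurable
        then show ?thesis by simp
      qed
      have "w p * (FC p)^2 \<le> w p * (Nf * (\<integral>\<^sup>+r. (g r * KC p (p + r))^2 \<partial>lborel))"
        using mult_left_mono[OF cs, of "w p"] tC unfolding Nf_def by simp
      also have "\<dots> = Nf * (w p * (\<integral>\<^sup>+r. (g r * KC p (p + r))^2 \<partial>lborel))" by (simp add: mult_ac)
      also have "w p * (\<integral>\<^sup>+r. (g r * KC p (p + r))^2 \<partial>lborel) = (\<integral>\<^sup>+r. w p * (g r * KC p (p + r))^2 \<partial>lborel)"
        by (rule nn_integral_cmult[symmetric]) measurable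
      finally show ?thesis .
    qed
    have "(\<integral>\<^sup>+p. w p * (FC p)^2 \<partial>lborel) \<le> (\<integral>\<^sup>+p. Nf * (\<integral>\<^sup>+r. w p * (g r * KC p (p + r))^2 \<partial>lborel) \<partial>lborel)"
      by (rule nn_integral_mono) (rule pC)
    also have "\<dots> = Nf * (\<integral>\<^sup>+p. (\<integral>\<^sup>+r. w p * (g r * KC p (p + r))^2 \<partial>lborel) \<partial>lborel)"
      by (rule nn_integral_cmult) measurable
    also have "(\<integral>\<^sup>+p. (\<integral>\<^sup>+r. w p * (g r * KC p (p + r))^2 \<partial>lborel) \<partial>lborel)
        = (\<integral>\<^sup>+r. (\<integral>\<^sup>+p. w p * (g r * KC p (p + r))^2 \<partial>lborel) \<partial>lborel)"
      by (rule lborel_pair.Fubini'[symmetric]) measurable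
    also have "\<dots> \<le> (\<integral>\<^sup>+r. (g r)^2 * CC \<partial>lborel)"
    proof (rule nn_integral_mono)
      fix r
      have "(\<integral>\<^sup>+p. w p * (g r * KC p (p + r))^2 \<partial>lborel) = (\<integral>\<^sup>+p. (g r)^2 * (w p * (KC p (p + r))^2) \<partial>lborel)"
        by (simp add: power_mult_distrib mult_ac)
      also have "\<dots> = (g r)^2 * (\<integral>\<^sup>+p. w p * (KC p (p + r))^2 \<partial>lborel)"
        by (rule nn_integral_cmult) measurable
      also have "\<dots> \<le> (g r)^2 * CC" by (rule mult_left_mono[OF C]) simp
      finally show "(\<integral>\<^sup>+p. w p * (g r * KC p (p + r))^2 \<partial>lborel) \<le> (g r)^2 * CC" .
    qed
    also have "\<dots> = Ng * CC" unfolding Ng_def by (rule nn_integral_multc) measurable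
    finally have "(\<integral>\<^sup>+p. w p * (FC p)^2 \<partial>lborel) \<le> Nf * (Ng * CC)" by (simp add: mult_left_mono)
    then show ?thesis by (simp add: mult_ac)
  qed
  have "(\<integral>\<^sup>+p. w p * (\<integral>\<^sup>+q. f q * g (q - p) * K p q \<partial>lborel)^2 \<partial>lborel)
      \<le> (\<integral>\<^sup>+p. 3 * (w p * (FA p)^2) + 3 * (w p * (FB p)^2) + 3 * (w p * (FC p)^2) \<partial>lborel)"
  proof (rule nn_integral_mono)
    fix p
    have "(\<integral>\<^sup>+q. f q * g (q - p) * K p q \<partial>lborel)^2 \<le> (FA p + FB p + FC p)^2"
      by (rule power_mono[OF Fle]) simp
    also have "\<dots> \<le> 3 * ((FA p)^2 + (FB p)^2 + (FC p)^2)" by (rule sq3_ennreal)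
    finally have "w p * (\<integral>\<^sup>+q. f q * g (q - p) * K p q \<partial>lborel)^2 \<le> w p * (3 * ((FA p)^2 + (FB p)^2 + (FC p)^2))"
      by (rule mult_left_mono) simp
    then show "w p * (\<integral>\<^sup>+q. f q * g (q - p) * K p q \<partial>lborel)^2 \<le> 3 * (w p * (FA p)^2) + 3 * (w p * (FB p)^2) + 3 * (w p * (FC p)^2)"
      by (simp add: distrib_left mult_ac)
  qed
  also have "\<dots> = 3 * (\<integral>\<^sup>+p. w p * (FA p)^2 \<partial>lborel) + 3 * (\<integral>\<^sup>+p. w p * (FB p)^2 \<partial>lborel) + 3 * (\<integral>\<^sup>+p. w p * (FC p)^2 \<partial>lborel)"
    by (simp add: nn_integral_add nn_integral_cmult)
  also have "\<dots> \<le> 3 * (CA * (Nf * Ng)) + 3 * (CB * (Nf * Ng)) + 3 * (CC * (Nf * Ng))"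
    by (intro add_mono mult_left_mono IA IB IC) auto
  also have "\<dots> = 3 * (CA + CB + CC) * (Nf * Ng)" by (simp add: distrib_left distrib_right mult_ac)
  finally show ?thesis unfolding Nf_def Ng_def .
qed

lemma inv_powr_le:
  fixes A B c e :: real
  assumes "0 < A" "0 < B" "0 < c" "A \<le> c * B" "0 \<le> e"
  shows "B powr (-e) \<le> c powr e * A powr (-e)"
proof -
  have "A powr e \<le> (c * B) powr e" using assms by (intro powr_mono2) auto
  also have "\<dots> = c powr e * B powr e" using assms by (simp add: powr_mult)
  finally have h: "A powr e \<le> c powr e * B powr e" .
  have "B powr (-e) = 1 / B powr e" by (simp add: powr_minus divide_inverse)
  also have "\<dots> \<le> c powr e / A powr e"
    using h assms by (simp add: divide_simps mult.commute)
  also have "\<dots> = c powr e * A powr (-e)" by (simp add: powr_minus divide_inverse)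
  finally show ?thesis .
qed

lemma jbr_le_prod: assumes "\<bar>u\<bar> \<le> \<bar>v\<bar> + \<bar>w\<bar>" shows "jbr u \<le> jbr v * jbr w"
proof -
  have "\<bar>u\<bar> \<le> \<bar>v\<bar> + \<bar>w\<bar>" by (rule assms)
  also have "\<dots> \<le> \<bar>v\<bar> + (\<bar>w\<bar> + \<bar>v\<bar> * \<bar>w\<bar>)" by simp
  finally have "\<bar>u\<bar> \<le> \<bar>v\<bar> + (\<bar>w\<bar> + \<bar>v\<bar> * \<bar>w\<bar>)" .
  then show ?thesis unfolding jbr_def by (simp add: algebra_simps)
qed

definition M1 :: "real \<Rightarrow> real \<Rightarrow> real" where "M1 x1 t1 = jbr (t1 + x1^2/2)"
definition M2 :: "real \<Rightarrow> real \<Rightarrow> real \<Rightarrow> real \<Rightarrow> real" where "M2 x t x1 t1 = jbr (t1 - t + (x1 - x)^2/2)"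
definition RR :: "real \<Rightarrow> real \<Rightarrow> real" where "RR x x1 = x * x1 - x^2/2"
definition ek :: "real \<Rightarrow> real" where "ek k = (if 0 \<le> k then -2*k else -4*k)"

lemma M1_pos: "M1 x1 t1 > 0" and M2_pos: "M2 x t x1 t1 > 0"
  by (simp_all add: M1_def M2_def jbr_pos)
lemma M1_ge1: "M1 x1 t1 \<ge> 1" and M2_ge1: "M2 x t x1 t1 \<ge> 1"
  by (simp_all add: M1_def M2_def jbr_ge1)

lemma max3_aux:
  fixes r A B C :: real
  assumes "r \<le> A + B + C" "0 \<le> A" "0 \<le> B" "0 \<le> C"
  shows "1 + r \<le> 3 * max (1 + C) (max (1 + A) (1 + B))"
proof -
  define M where "M = max (1 + C) (max (1 + A) (1 + B))"
  have "1 + C \<le> M" "1 + A \<le> M" "1 + B \<le> M" unfolding M_def by auto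
  then have "1 + r \<le> 3 * M" using assms by linarith
  then show ?thesis unfolding M_def .
qed

lemma jRR: "jbr (RR x x1) \<le> 3 * max (jbr t) (max (M1 x1 t1) (M2 x t x1 t1))"
proof -
  have e: "RR x x1 = (t1 + x1^2/2) - (t1 - t + (x1 - x)^2/2) - t"
    by (simp add: RR_def power2_eq_square field_simps)
  have "\<bar>RR x x1\<bar> \<le> \<bar>t1 + x1^2/2\<bar> + \<bar>t1 - t + (x1 - x)^2/2\<bar> + \<bar>t\<bar>"
    unfolding e by (rule order_trans[OF abs_triangle_ineq4] add_mono order_trans[OF abs_triangle_ineq4] order_refl)+
  then show ?thesis unfolding M1_def M2_def jbr_def by (rule max3_aux) auto
qed

lemma ek_cases: "ek k = -2*k \<or> ek k = -4*k" by (simp add: ek_def)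

lemma J_I:
  assumes x1: "\<bar>x\<bar> \<ge> 1" and ak: "0 \<le> 2*a + 4*k" and a0: "0 \<le> a"
  shows "jbr x1 powr (-2*k) * jbr (x1 - x) powr (-2*k) * jbr (RR x x1) powr (-2*a) \<le> jbr x powr (ek k)"
proof (cases "0 \<le> k")
  case True
  have "jbr x \<le> jbr x1 * jbr (x1 - x)" by (rule jbr_le_prod) linarith
  then have "(jbr x1 * jbr (x1 - x)) powr (-2*k) \<le> jbr x powr (-2*k)"
    using True by (intro powr_mono2') (auto simp: jbr_pos)
  then have h: "jbr x1 powr (-2*k) * jbr (x1 - x) powr (-2*k) \<le> jbr x powr (-2*k)"
    by (simp add: powr_mult jbr_nn)
  have "jbr (RR x x1) powr (-2*a) \<le> 1" using a0 by (intro jbr_powr_le1) auto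
  then have "jbr x1 powr (-2*k) * jbr (x1 - x) powr (-2*k) * jbr (RR x x1) powr (-2*a)
      \<le> jbr x1 powr (-2*k) * jbr (x1 - x) powr (-2*k) * 1"
    by (intro mult_left_mono) auto
  also have "\<dots> \<le> jbr x powr (ek k)" using h True by (simp add: ek_def)
  finally show ?thesis .
next
  case False
  define R where "R = RR x x1"
  have xne: "x \<noteq> 0" using x1 by auto
  have "x1 = R / x + x / 2" unfolding R_def RR_def using xne by (simp add: field_simps power2_eq_square)
  then have ex: "x1 = R / x + x / 2" "x1 - x = R / x - x / 2" by simp_all
  have Rx: "\<bar>R / x\<bar> \<le> \<bar>R\<bar>"
  proof -
    have "\<bar>R / x\<bar> * 1 \<le> \<bar>R / x\<bar> * \<bar>x\<bar>" using x1 by (intro mult_left_mono) auto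
    also have "\<bar>R / x\<bar> * \<bar>x\<bar> = \<bar>R\<bar>" using xne by (simp add: abs_divide)
    finally show ?thesis by simp
  qed
  have x2: "\<bar>x / 2\<bar> \<le> \<bar>x\<bar>" by simp
  have b1: "jbr x1 \<le> jbr R * jbr x"
  proof -
    have "\<bar>x1\<bar> \<le> \<bar>R / x\<bar> + \<bar>x / 2\<bar>" unfolding ex(1) by (rule abs_triangle_ineq)
    also have "\<dots> \<le> \<bar>R\<bar> + \<bar>x\<bar>" using Rx x2 by (rule add_mono)
    finally have "\<bar>x1\<bar> \<le> \<bar>R\<bar> + \<bar>x\<bar>" .
    then show ?thesis by (rule jbr_le_prod)
  qed
  have b2: "jbr (x1 - x) \<le> jbr R * jbr x"
  proof -
    have "\<bar>x1 - x\<bar> \<le> \<bar>R / x\<bar> + \<bar>x / 2\<bar>" unfolding ex(2) by (rule abs_triangle_ineq4)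
    also have "\<dots> \<le> \<bar>R\<bar> + \<bar>x\<bar>" using Rx x2 by (rule add_mono)
    finally have "\<bar>x1 - x\<bar> \<le> \<bar>R\<bar> + \<bar>x\<bar>" .
    then show ?thesis by (rule jbr_le_prod)
  qed
  have kk: "-2*k \<ge> 0" using False by simp
  have "jbr x1 powr (-2*k) \<le> (jbr R * jbr x) powr (-2*k)" using b1 kk by (intro powr_mono2) (auto simp: jbr_nn)
  moreover have "jbr (x1 - x) powr (-2*k) \<le> (jbr R * jbr x) powr (-2*k)" using b2 kk by (intro powr_mono2) (auto simp: jbr_nn)
  ultimately have "jbr x1 powr (-2*k) * jbr (x1 - x) powr (-2*k) \<le> (jbr R * jbr x) powr (-2*k) * (jbr R * jbr x) powr (-2*k)"
    by (intro mult_mono) auto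
  also have "\<dots> = jbr R powr (-4*k) * jbr x powr (-4*k)"
    by (simp add: powr_mult jbr_nn powr_add[symmetric] mult_ac)
  finally have h: "jbr x1 powr (-2*k) * jbr (x1 - x) powr (-2*k) \<le> jbr R powr (-4*k) * jbr x powr (-4*k)" .
  have "jbr x1 powr (-2*k) * jbr (x1 - x) powr (-2*k) * jbr R powr (-2*a)
      \<le> jbr R powr (-4*k) * jbr x powr (-4*k) * jbr R powr (-2*a)"
    by (intro mult_right_mono[OF h]) auto
  also have "\<dots> = jbr R powr (-4*k + -2*a) * jbr x powr (-4*k)"
    by (simp only: powr_add mult_ac)
  also have "\<dots> \<le> 1 * jbr x powr (-4*k)"
    using ak by (intro mult_right_mono jbr_powr_le1) auto
  finally show ?thesis using False unfolding R_def ek_def by simp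
qed

lemma J_H:
  assumes h: "\<bar>x1\<bar> \<le> 3 * \<bar>x\<bar>"
  shows "jbr x1 powr (-2*k) * jbr (x1 - x) powr (-2*k) \<le> 12 powr (2*\<bar>k\<bar>) * jbr x powr (ek k)"
proof (cases "0 \<le> k")
  case True
  have "jbr x \<le> jbr x1 * jbr (x1 - x)" by (rule jbr_le_prod) linarith
  then have "(jbr x1 * jbr (x1 - x)) powr (-2*k) \<le> jbr x powr (-2*k)"
    using True by (intro powr_mono2') (auto simp: jbr_pos)
  then have h: "jbr x1 powr (-2*k) * jbr (x1 - x) powr (-2*k) \<le> jbr x powr (-2*k)"
    by (simp add: powr_mult jbr_nn)
  have "1 \<le> 12 powr (2*\<bar>k\<bar>)" by (rule ge_one_powr_ge_zero) auto
  then have "1 * jbr x powr (-2*k) \<le> 12 powr (2*\<bar>k\<bar>) * jbr x powr (-2*k)"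
    by (intro mult_right_mono) auto
  then show ?thesis using h True unfolding ek_def by simp
next
  case False
  have kk: "-2*k \<ge> 0" using False by simp
  have a1: "\<bar>x1\<bar> \<le> \<bar>x\<bar> + 2 * \<bar>x\<bar>" using h by simp
  have b1: "jbr x1 \<le> 3 * jbr x" using a1 unfolding jbr_def by simp
  have a2: "\<bar>x1 - x\<bar> \<le> \<bar>x1\<bar> + \<bar>x\<bar>" by (rule abs_triangle_ineq4)
  have b2: "jbr (x1 - x) \<le> 4 * jbr x" using a2 h unfolding jbr_def by simp
  have "jbr x1 * jbr (x1 - x) \<le> (3 * jbr x) * (4 * jbr x)" using b1 b2 by (intro mult_mono) (auto simp: jbr_nn)
  also have "\<dots> = 12 * (jbr x * jbr x)" by simp
  finally have "(jbr x1 * jbr (x1 - x)) powr (-2*k) \<le> (12 * (jbr x * jbr x)) powr (-2*k)"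
    using kk by (intro powr_mono2) (auto simp: jbr_nn)
  also have "\<dots> = 12 powr (-2*k) * (jbr x powr (-2*k) * jbr x powr (-2*k))"
    by (simp add: powr_mult jbr_nn)
  also have "\<dots> = 12 powr (-2*k) * jbr x powr (-4*k)"
    by (simp add: powr_add[symmetric])
  finally have "jbr x1 powr (-2*k) * jbr (x1 - x) powr (-2*k) \<le> 12 powr (-2*k) * jbr x powr (-4*k)"
    by (simp add: powr_mult jbr_nn)
  moreover have "\<bar>k\<bar> = -k" using False by simp
  ultimately show ?thesis using False unfolding ek_def by simp
qed

lemma iter2:
  fixes h :: "real \<times> real \<Rightarrow> ennreal"
  assumes [measurable]: "h \<in> borel_measurable (lborel \<Otimes>\<^sub>M lborel)"
  shows "(\<integral>\<^sup>+z. h z \<partial>lborel) = (\<integral>\<^sup>+x. (\<integral>\<^sup>+y. h (x, y) \<partial>lborel) \<partial>lborel)"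
proof -
  have "(\<integral>\<^sup>+x. (\<integral>\<^sup>+y. h (x, y) \<partial>lborel) \<partial>lborel) = (\<integral>\<^sup>+z. h z \<partial>(lborel \<Otimes>\<^sub>M lborel))"
    by (rule lborel.nn_integral_fst) (rule assms)
  also have "\<dots> = (\<integral>\<^sup>+z. h z \<partial>lborel)" by (simp only: lborel_prod)
  finally show ?thesis by simp
qed

lemma A1:
  assumes "x \<noteq> 0" "1 < 2*b"
  shows "ennreal \<bar>x\<bar> * (\<integral>\<^sup>+q. ennreal (M1 (fst q) (snd q) powr (-2*b) * M2 x t (fst q) (snd q) powr (-2*b)) \<partial>lborel)
     \<le> ennreal (2 powr (2*b)) * (2 * Ij (2*b)) * Ij (2*b)"
proof -
  have inner: "(\<integral>\<^sup>+t1. ennreal (M1 x1 t1 powr (-2*b) * M2 x t x1 t1 powr (-2*b)) \<partial>lborel)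
      \<le> ennreal (2 powr (2*b) * jbr ((t - x^2/2) + x * x1) powr (-(2*b))) * (2 * Ij (2*b))" for x1
  proof -
    have e1: "M1 x1 t1 = jbr (t1 - (- (x1^2/2)))" for t1 by (simp add: M1_def)
    have e2: "M2 x t x1 t1 = jbr (t1 - (t - (x1 - x)^2/2))" for t1 by (simp add: M2_def algebra_simps)
    have e3: "jbr (- (x1^2/2) - (t - (x1 - x)^2/2)) = jbr ((t - x^2/2) + x * x1)"
    proof -
      have "- (x1^2/2) - (t - (x1 - x)^2/2) = - ((t - x^2/2) + x * x1)" by (simp add: power2_eq_square field_simps)
      then show ?thesis by (simp only: jbr_minus)
    qed
    show ?thesis
      using conv_bound[of "2*b" "2*b" "- (x1^2/2)" "t - (x1 - x)^2/2"] assms unfolding e1 e2 e3 by simp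
  qed
  have "(\<integral>\<^sup>+q. ennreal (M1 (fst q) (snd q) powr (-2*b) * M2 x t (fst q) (snd q) powr (-2*b)) \<partial>lborel)
      = (\<integral>\<^sup>+x1. (\<integral>\<^sup>+t1. ennreal (M1 x1 t1 powr (-2*b) * M2 x t x1 t1 powr (-2*b)) \<partial>lborel) \<partial>lborel)"
  proof -
    have m: "(\<lambda>q. ennreal (M1 (fst q) (snd q) powr (-2*b) * M2 x t (fst q) (snd q) powr (-2*b))) \<in> borel_measurable (lborel \<Otimes>\<^sub>M lborel)"
      unfolding M1_def M2_def by measurable
    show ?thesis using iter2[OF m] by simp
  qed
  also have "\<dots> \<le> (\<integral>\<^sup>+x1. ennreal (2 powr (2*b) * jbr ((t - x^2/2) + x * x1) powr (-(2*b))) * (2 * Ij (2*b)) \<partial>lborel)"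
    by (rule nn_integral_mono) (rule inner)
  also have "\<dots> = (\<integral>\<^sup>+x1. ennreal (2 powr (2*b)) * ennreal (jbr ((t - x^2/2) + x * x1) powr (-(2*b))) \<partial>lborel) * (2 * Ij (2*b))"
    by (subst nn_integral_multc) (measurable, simp add: ennreal_mult)
  also have "(\<integral>\<^sup>+x1. ennreal (2 powr (2*b)) * ennreal (jbr ((t - x^2/2) + x * x1) powr (-(2*b))) \<partial>lborel)
      = ennreal (2 powr (2*b)) * (\<integral>\<^sup>+x1. ennreal (jbr ((t - x^2/2) + x * x1) powr (-(2*b))) \<partial>lborel)"
    by (rule nn_integral_cmult) measurable
  finally have h: "(\<integral>\<^sup>+q. ennreal (M1 (fst q) (snd q) powr (-2*b) * M2 x t (fst q) (snd q) powr (-2*b)) \<partial>lborel)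
     \<le> ennreal (2 powr (2*b)) * (\<integral>\<^sup>+x1. ennreal (jbr ((t - x^2/2) + x * x1) powr (-(2*b))) \<partial>lborel) * (2 * Ij (2*b))" .
  have aff: "ennreal \<bar>x\<bar> * (\<integral>\<^sup>+x1. ennreal (jbr ((t - x^2/2) + x * x1) powr (-(2*b))) \<partial>lborel) = Ij (2*b)"
    by (rule Ij_affine) (rule assms)
  have "ennreal \<bar>x\<bar> * (\<integral>\<^sup>+q. ennreal (M1 (fst q) (snd q) powr (-2*b) * M2 x t (fst q) (snd q) powr (-2*b)) \<partial>lborel)
     \<le> ennreal \<bar>x\<bar> * (ennreal (2 powr (2*b)) * (\<integral>\<^sup>+x1. ennreal (jbr ((t - x^2/2) + x * x1) powr (-(2*b))) \<partial>lborel) * (2 * Ij (2*b)))"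
    by (rule mult_left_mono[OF h]) simp
  also have "\<dots> = ennreal (2 powr (2*b)) * (2 * Ij (2*b)) * (ennreal \<bar>x\<bar> * (\<integral>\<^sup>+x1. ennreal (jbr ((t - x^2/2) + x * x1) powr (-(2*b))) \<partial>lborel))"
    by (simp add: mult_ac)
  also have "\<dots> = ennreal (2 powr (2*b)) * (2 * Ij (2*b)) * Ij (2*b)" unfolding aff ..
  finally show ?thesis .
qed

lemma A23:
  assumes x0: "x \<noteq> 0" and [measurable]: "c \<in> borel_measurable borel"
  shows "ennreal \<bar>x\<bar> * (\<integral>\<^sup>+q. ennreal (jbr (RR x (fst q)) powr (-2*b) * jbr (snd q - c (fst q)) powr (-2*b)) \<partial>lborel)
     = Ij (2*b) * Ij (2*b)"
proof -
  have m: "(\<lambda>q. ennreal (jbr (RR x (fst q)) powr (-2*b) * jbr (snd q - c (fst q)) powr (-2*b))) \<in> borel_measurable (lborel \<Otimes>\<^sub>M lborel)"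
    unfolding RR_def by measurable
  have "(\<integral>\<^sup>+q. ennreal (jbr (RR x (fst q)) powr (-2*b) * jbr (snd q - c (fst q)) powr (-2*b)) \<partial>lborel)
     = (\<integral>\<^sup>+x1. (\<integral>\<^sup>+t1. ennreal (jbr (RR x x1) powr (-2*b)) * ennreal (jbr (t1 - c x1) powr (-2*b)) \<partial>lborel) \<partial>lborel)"
    using iter2[OF m] by (simp add: ennreal_mult)
  also have "\<dots> = (\<integral>\<^sup>+x1. ennreal (jbr (RR x x1) powr (-2*b)) * Ij (2*b) \<partial>lborel)"
  proof (rule nn_integral_cong)
    fix x1
    have "(\<integral>\<^sup>+t1. ennreal (jbr (RR x x1) powr (-2*b)) * ennreal (jbr (t1 - c x1) powr (-2*b)) \<partial>lborel)
        = ennreal (jbr (RR x x1) powr (-2*b)) * (\<integral>\<^sup>+t1. ennreal (jbr (t1 - c x1) powr (-2*b)) \<partial>lborel)"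
      by (rule nn_integral_cmult) measurable
    also have "(\<integral>\<^sup>+t1. ennreal (jbr (t1 - c x1) powr (-2*b)) \<partial>lborel) = Ij (2*b)"
      using Ij_shift[of "c x1" "2*b"] by simp
    finally show "(\<integral>\<^sup>+t1. ennreal (jbr (RR x x1) powr (-2*b)) * ennreal (jbr (t1 - c x1) powr (-2*b)) \<partial>lborel)
        = ennreal (jbr (RR x x1) powr (-2*b)) * Ij (2*b)" .
  qed
  also have "\<dots> = (\<integral>\<^sup>+x1. ennreal (jbr (RR x x1) powr (-2*b)) \<partial>lborel) * Ij (2*b)"
    by (rule nn_integral_multc) (unfold RR_def, measurable)
  finally have h: "(\<integral>\<^sup>+q. ennreal (jbr (RR x (fst q)) powr (-2*b) * jbr (snd q - c (fst q)) powr (-2*b)) \<partial>lborel)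
     = (\<integral>\<^sup>+x1. ennreal (jbr (RR x x1) powr (-2*b)) \<partial>lborel) * Ij (2*b)" .
  have aff: "ennreal \<bar>x\<bar> * (\<integral>\<^sup>+x1. ennreal (jbr ((- (x^2/2)) + x * x1) powr (-(2*b))) \<partial>lborel) = Ij (2*b)"
    by (rule Ij_affine) (rule x0)
  have "RR x x1 = (- (x^2/2)) + x * x1" for x1 by (simp add: RR_def)
  then have aff': "ennreal \<bar>x\<bar> * (\<integral>\<^sup>+x1. ennreal (jbr (RR x x1) powr (-2*b)) \<partial>lborel) = Ij (2*b)"
    using aff by simp
  show ?thesis unfolding h using aff' by (simp add: mult.assoc[symmetric])
qed

lemma A_abs:
  fixes X T J P1 P2 Q E cT cJ cP :: real
  assumes nn: "0 \<le> X" "0 \<le> T" "0 \<le> J" "0 \<le> P1" "0 \<le> P2" "0 \<le> Q" "0 \<le> E" "0 \<le> cT" "0 \<le> cJ" "0 \<le> cP"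
  assumes cases: "T * J \<le> cT * E \<or> (J \<le> cJ * E \<and> T \<le> 1 \<and> P1 * P2 \<le> cP * (Q * P1 + Q * P2))"
  shows "X * T * (J * P1 * P2) \<le> (cT + cP * cJ) * (X * E) * (P1 * P2 + Q * P1 + Q * P2)"
  using cases
proof
  assume c1: "T * J \<le> cT * E"
  have "X * T * (J * P1 * P2) = X * (T * J) * (P1 * P2)" by (simp add: mult_ac)
  also have "\<dots> \<le> X * (cT * E) * (P1 * P2)" using c1 nn by (intro mult_right_mono mult_left_mono) auto
  also have "\<dots> = cT * (X * E) * (P1 * P2)" by (simp add: mult_ac)
  also have "\<dots> \<le> (cT + cP * cJ) * (X * E) * (P1 * P2 + Q * P1 + Q * P2)"
    using nn by (intro mult_mono add_increasing2) auto
  finally show ?thesis .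
next
  assume c2: "J \<le> cJ * E \<and> T \<le> 1 \<and> P1 * P2 \<le> cP * (Q * P1 + Q * P2)"
  have "X * T * (J * P1 * P2) = X * T * J * (P1 * P2)" by (simp add: mult_ac)
  also have "\<dots> \<le> X * 1 * (cJ * E) * (cP * (Q * P1 + Q * P2))"
  proof -
    have "X * T \<le> X * 1" using c2 nn by (intro mult_left_mono) auto
    then have "X * T * J \<le> X * 1 * (cJ * E)" using c2 nn by (rule_tac mult_mono) auto
    then show ?thesis using c2 nn by (rule_tac mult_mono) auto
  qed
  also have "\<dots> = (cP * cJ) * (X * E) * (Q * P1 + Q * P2)" by (simp add: mult_ac)
  also have "\<dots> \<le> (cT + cP * cJ) * (X * E) * (P1 * P2 + Q * P1 + Q * P2)"
    using nn by (intro mult_mono) auto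
  finally show ?thesis .
qed

definition cA :: "real \<Rightarrow> real \<Rightarrow> real \<Rightarrow> real" where
  "cA k a b = 3 powr (2*a) + 3 powr (2*b) * 12 powr (2*\<bar>k\<bar>)"

lemma A_pw:
  fixes x t x1 t1 :: real
  assumes x1': "1 \<le> \<bar>x\<bar>" and ak: "0 \<le> 2*a + 4*k" and a0: "0 \<le> a" and b0: "0 \<le> b"
    and S: "(M1 x1 t1 \<le> jbr t \<and> M2 x t x1 t1 \<le> jbr t) \<or> \<not> (2*\<bar>x\<bar> < \<bar>x1\<bar> \<and> 2*\<bar>x\<bar> < \<bar>x1 - x\<bar>)"
  shows "jbr x powr (2 * s) * jbr t powr (-2*a) * (jbr x1 powr (-2*k) * jbr (x1 - x) powr (-2*k) * M1 x1 t1 powr (-2*b) * M2 x t x1 t1 powr (-2*b))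
    \<le> cA k a b * jbr x powr (2 * s + ek k) * (M1 x1 t1 powr (-2*b) * M2 x t x1 t1 powr (-2*b)
        + jbr (RR x x1) powr (-2*b) * M1 x1 t1 powr (-2*b) + jbr (RR x x1) powr (-2*b) * M2 x t x1 t1 powr (-2*b))"
proof -
  let ?T = "jbr t powr (-2*a)"
  let ?J = "jbr x1 powr (-2*k) * jbr (x1 - x) powr (-2*k)"
  let ?P1 = "M1 x1 t1 powr (-2*b)"
  let ?P2 = "M2 x t x1 t1 powr (-2*b)"
  let ?Q = "jbr (RR x x1) powr (-2*b)"
  let ?E = "jbr x powr (ek k)"
  have jr: "jbr (RR x x1) \<le> 3 * max (jbr t) (max (M1 x1 t1) (M2 x t x1 t1))" by (rule jRR)
  have cases: "?T * ?J \<le> 3 powr (2*a) * ?E \<or> (?J \<le> 12 powr (2*\<bar>k\<bar>) * ?E \<and> ?T \<le> 1 \<and> ?P1 * ?P2 \<le> 3 powr (2*b) * (?Q * ?P1 + ?Q * ?P2))"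
  proof (cases "M1 x1 t1 \<le> jbr t \<and> M2 x t x1 t1 \<le> jbr t")
    case True
    then have "max (jbr t) (max (M1 x1 t1) (M2 x t x1 t1)) = jbr t" by simp
    then have "jbr (RR x x1) \<le> 3 * jbr t" using jr by simp
    then have "jbr t powr (-(2*a)) \<le> 3 powr (2*a) * jbr (RR x x1) powr (-(2*a))"
      using a0 by (intro inv_powr_le[where A="jbr (RR x x1)"]) (auto simp: jbr_pos)
    then have "?T \<le> 3 powr (2*a) * jbr (RR x x1) powr (-(2*a))" by simp
    then have "?T * ?J \<le> (3 powr (2*a) * jbr (RR x x1) powr (-(2*a))) * ?J"
      by (rule mult_right_mono) simp
    also have "\<dots> = 3 powr (2*a) * (?J * jbr (RR x x1) powr (-2*a))" by simp
    also have "\<dots> \<le> 3 powr (2*a) * ?E"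
      using J_I[OF x1' ak a0, of x1] by (intro mult_left_mono) auto
    finally show ?thesis by blast
  next
    case False
    with S have nH: "\<bar>x1\<bar> \<le> 3 * \<bar>x\<bar>" by auto
    have J: "?J \<le> 12 powr (2*\<bar>k\<bar>) * ?E" by (rule J_H[OF nH])
    have T: "?T \<le> 1" using a0 by (intro jbr_powr_le1) auto
    have P: "?P1 * ?P2 \<le> 3 powr (2*b) * (?Q * ?P1 + ?Q * ?P2)"
    proof (cases "M2 x t x1 t1 \<le> M1 x1 t1")
      case True
      with False have "max (jbr t) (max (M1 x1 t1) (M2 x t x1 t1)) = M1 x1 t1" by auto
      then have "jbr (RR x x1) \<le> 3 * M1 x1 t1" using jr by simp
      then have "M1 x1 t1 powr (-(2*b)) \<le> 3 powr (2*b) * jbr (RR x x1) powr (-(2*b))"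
        using b0 by (intro inv_powr_le[where A="jbr (RR x x1)"]) (auto simp: jbr_pos M1_pos)
      then have "?P1 \<le> 3 powr (2*b) * jbr (RR x x1) powr (-(2*b))" by simp
      then have "?P1 * ?P2 \<le> (3 powr (2*b) * jbr (RR x x1) powr (-(2*b))) * ?P2"
        by (rule mult_right_mono) simp
      also have "\<dots> = 3 powr (2*b) * (?Q * ?P2)" by simp
      also have "\<dots> \<le> 3 powr (2*b) * (?Q * ?P1 + ?Q * ?P2)" by (intro mult_left_mono) auto
      finally show ?thesis .
    next
      case F2: False
      with False have "max (jbr t) (max (M1 x1 t1) (M2 x t x1 t1)) = M2 x t x1 t1" by auto
      then have "jbr (RR x x1) \<le> 3 * M2 x t x1 t1" using jr by simp
      then have "M2 x t x1 t1 powr (-(2*b)) \<le> 3 powr (2*b) * jbr (RR x x1) powr (-(2*b))"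
        using b0 by (intro inv_powr_le[where A="jbr (RR x x1)"]) (auto simp: jbr_pos M2_pos)
      then have "?P2 \<le> 3 powr (2*b) * jbr (RR x x1) powr (-(2*b))" by simp
      then have "?P1 * ?P2 \<le> ?P1 * (3 powr (2*b) * jbr (RR x x1) powr (-(2*b)))"
        by (rule mult_left_mono) simp
      also have "\<dots> = 3 powr (2*b) * (?Q * ?P1)" by simp
      also have "\<dots> \<le> 3 powr (2*b) * (?Q * ?P1 + ?Q * ?P2)" by (intro mult_left_mono) auto
      finally show ?thesis .
    qed
    show ?thesis using J T P by blast
  qed
  have "jbr x powr (2 * s) * ?T * (?J * ?P1 * ?P2) \<le> (3 powr (2*a) + 3 powr (2*b) * 12 powr (2*\<bar>k\<bar>)) * (jbr x powr (2 * s) * ?E) * (?P1 * ?P2 + ?Q * ?P1 + ?Q * ?P2)"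
    by (rule A_abs[OF _ _ _ _ _ _ _ _ _ _ cases]) auto
  moreover have "jbr x powr (2 * s) * ?E = jbr x powr (2 * s + ek k)" by (simp add: powr_add)
  ultimately show ?thesis unfolding cA_def by (simp only: mult.assoc)
qed

definition Kr2 :: "real \<Rightarrow> real \<Rightarrow> real \<times> real \<Rightarrow> real \<times> real \<Rightarrow> real" where
  "Kr2 k b p q = jbr (fst q) powr (-2*k) * jbr (fst q - fst p) powr (-2*k) * M1 (fst q) (snd q) powr (-2*b) * M2 (fst p) (snd p) (fst q) (snd q) powr (-2*b)"
definition Wr :: "real \<Rightarrow> real \<Rightarrow> real \<times> real \<Rightarrow> real" where
  "Wr s a p = jbr (fst p) powr (2 * s) * jbr (snd p) powr (-2*a)"
definition domI :: "real \<times> real \<Rightarrow> real \<times> real \<Rightarrow> bool" where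
  "domI p q \<longleftrightarrow> M1 (fst q) (snd q) \<le> jbr (snd p) \<and> M2 (fst p) (snd p) (fst q) (snd q) \<le> jbr (snd p)"
definition HH :: "real \<times> real \<Rightarrow> real \<times> real \<Rightarrow> bool" where
  "HH p q \<longleftrightarrow> 2 * \<bar>fst p\<bar> < \<bar>fst q\<bar> \<and> 2 * \<bar>fst p\<bar> < \<bar>fst q - fst p\<bar>"
definition lo :: "real \<times> real \<Rightarrow> bool" where
  "lo p \<longleftrightarrow> \<bar>fst p\<bar> < 1"
definition SA :: "real \<times> real \<Rightarrow> real \<times> real \<Rightarrow> bool" where
  "SA p q \<longleftrightarrow> \<not> lo p \<and> (domI p q \<or> \<not> HH p q)"
definition SB :: "real \<times> real \<Rightarrow> real \<times> real \<Rightarrow> bool" where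
  "SB p q \<longleftrightarrow> lo p \<or> (\<not> lo p \<and> \<not> domI p q \<and> HH p q \<and> M2 (fst p) (snd p) (fst q) (snd q) \<le> M1 (fst q) (snd q))"
definition SC :: "real \<times> real \<Rightarrow> real \<times> real \<Rightarrow> bool" where
  "SC p q \<longleftrightarrow> \<not> lo p \<and> \<not> domI p q \<and> HH p q \<and> M1 (fst q) (snd q) < M2 (fst p) (snd p) (fst q) (snd q)"

lemma meas_lp: "h \<in> borel_measurable (lborel \<Otimes>\<^sub>M lborel) \<Longrightarrow> h \<in> borel_measurable (lborel::(real\<times>real) measure)"
  by (simp only: lborel_prod)

lemma ennreal_mult3: "0 \<le> c \<Longrightarrow> 0 \<le> A \<Longrightarrow> 0 \<le> B \<Longrightarrow> 0 \<le> C \<Longrightarrow>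
  ennreal (c * (A + B + C)) = ennreal c * (ennreal A + ennreal B + ennreal C)"
  by (simp add: ennreal_mult)

lemma Kr2_nn: "0 \<le> Kr2 k b p q" by (simp add: Kr2_def)
lemma Wr_nn: "0 \<le> Wr s a p" by (simp add: Wr_def)

lemma A_bound:
  assumes ak: "0 \<le> 2*a + 4*k" and a0: "0 \<le> a" and b1: "1 < 2*b" and se: "2 * s + ek k \<le> 1"
  shows "ennreal (Wr s a p) * (\<integral>\<^sup>+q. ennreal (if SA p q then Kr2 k b p q else 0) \<partial>lborel)
    \<le> ennreal (2 * cA k a b) * (ennreal (2 powr (2*b)) * (2 * Ij (2*b)) * Ij (2*b) + 2 * (Ij (2*b) * Ij (2*b)))"
proof -
  obtain x t where p: "p = (x, t)" by (cases p)
  let ?Z = "ennreal (2 powr (2*b)) * (2 * Ij (2*b)) * Ij (2*b) + 2 * (Ij (2*b) * Ij (2*b))"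
  have b0: "0 \<le> b" using b1 by simp
  have cA0: "0 \<le> cA k a b" unfolding cA_def by simp
  have eq: "ennreal (Wr s a p) * (\<integral>\<^sup>+q. ennreal (if SA p q then Kr2 k b p q else 0) \<partial>lborel)
     = (\<integral>\<^sup>+q. ennreal (Wr s a p * (if SA p q then Kr2 k b p q else 0)) \<partial>lborel)"
  proof -
    have m: "(\<lambda>q. ennreal (if SA p q then Kr2 k b p q else 0)) \<in> borel_measurable lborel"
      unfolding SA_def lo_def domI_def HH_def Kr2_def M1_def M2_def by (rule meas_lp) measurable
    have "(\<integral>\<^sup>+q. ennreal (Wr s a p * (if SA p q then Kr2 k b p q else 0)) \<partial>lborel)
        = (\<integral>\<^sup>+q. ennreal (Wr s a p) * ennreal (if SA p q then Kr2 k b p q else 0) \<partial>lborel)"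
      by (rule nn_integral_cong) (simp add: ennreal_mult Wr_nn Kr2_nn)
    then show ?thesis using nn_integral_cmult[OF m, of "ennreal (Wr s a p)"] by simp
  qed
  show ?thesis
  proof (cases "lo p")
    case True
    then have "(\<integral>\<^sup>+q. ennreal (Wr s a p * (if SA p q then Kr2 k b p q else 0)) \<partial>lborel) = 0"
      by (simp add: SA_def)
    then show ?thesis unfolding eq by simp
  next
    case False
    then have x1: "1 \<le> \<bar>x\<bar>" by (simp add: lo_def p)
    then have x0: "x \<noteq> 0" by auto
    define G where "G = jbr x powr (2 * s + ek k)"
    have G0: "0 \<le> G" unfolding G_def by simp
    let ?P = "\<lambda>q::real\<times>real. M1 (fst q) (snd q) powr (-2*b) * M2 x t (fst q) (snd q) powr (-2*b)"
    let ?Q1 = "\<lambda>q::real\<times>real. jbr (RR x (fst q)) powr (-2*b) * M1 (fst q) (snd q) powr (-2*b)"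
    let ?Q2 = "\<lambda>q::real\<times>real. jbr (RR x (fst q)) powr (-2*b) * M2 x t (fst q) (snd q) powr (-2*b)"
    have pw: "ennreal (Wr s a p * (if SA p q then Kr2 k b p q else 0))
        \<le> ennreal (cA k a b * G) * (ennreal (?P q) + ennreal (?Q1 q) + ennreal (?Q2 q))" for q
    proof (cases "SA p q")
      case True
      obtain x1 t1 where q: "q = (x1, t1)" by (cases q)
      have S: "(M1 x1 t1 \<le> jbr t \<and> M2 x t x1 t1 \<le> jbr t) \<or> \<not> (2*\<bar>x\<bar> < \<bar>x1\<bar> \<and> 2*\<bar>x\<bar> < \<bar>x1 - x\<bar>)"
        using True unfolding SA_def domI_def HH_def p q by auto
      have "Wr s a p * Kr2 k b p q \<le> cA k a b * G * (?P q + ?Q1 q + ?Q2 q)"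
        using A_pw[OF x1 ak a0 b0 S, of s] unfolding Wr_def Kr2_def p q G_def
        by (simp add: mult.assoc)
      then have "ennreal (Wr s a p * Kr2 k b p q) \<le> ennreal (cA k a b * G * (?P q + ?Q1 q + ?Q2 q))"
        by (rule ennreal_leI)
      also have "\<dots> = ennreal (cA k a b * G) * (ennreal (?P q) + ennreal (?Q1 q) + ennreal (?Q2 q))"
        using cA0 G0 by (intro ennreal_mult3) auto
      finally show ?thesis using True by simp
    next
      case False
      then show ?thesis by simp
    qed
    have mP: "(\<lambda>q. ennreal (?P q)) \<in> borel_measurable lborel" unfolding M1_def M2_def by (rule meas_lp) measurable
    have mQ1: "(\<lambda>q. ennreal (?Q1 q)) \<in> borel_measurable lborel" unfolding RR_def M1_def by (rule meas_lp) measurable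
    have mQ2: "(\<lambda>q. ennreal (?Q2 q)) \<in> borel_measurable lborel" unfolding RR_def M2_def by (rule meas_lp) measurable
    have "(\<integral>\<^sup>+q. ennreal (Wr s a p * (if SA p q then Kr2 k b p q else 0)) \<partial>lborel)
        \<le> (\<integral>\<^sup>+q. ennreal (cA k a b * G) * (ennreal (?P q) + ennreal (?Q1 q) + ennreal (?Q2 q)) \<partial>lborel)"
      by (rule nn_integral_mono) (rule pw)
    also have "\<dots> = ennreal (cA k a b * G) * ((\<integral>\<^sup>+q. ennreal (?P q) \<partial>lborel) + (\<integral>\<^sup>+q. ennreal (?Q1 q) \<partial>lborel) + (\<integral>\<^sup>+q. ennreal (?Q2 q) \<partial>lborel))"
    proof -
      have "(\<integral>\<^sup>+q. ennreal (cA k a b * G) * (ennreal (?P q) + ennreal (?Q1 q) + ennreal (?Q2 q)) \<partial>lborel)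
          = ennreal (cA k a b * G) * (\<integral>\<^sup>+q. (ennreal (?P q) + ennreal (?Q1 q) + ennreal (?Q2 q)) \<partial>lborel)"
        by (rule nn_integral_cmult) (intro borel_measurable_add mP mQ1 mQ2)
      also have "(\<integral>\<^sup>+q. (ennreal (?P q) + ennreal (?Q1 q) + ennreal (?Q2 q)) \<partial>lborel)
          = (\<integral>\<^sup>+q. (ennreal (?P q) + ennreal (?Q1 q)) \<partial>lborel) + (\<integral>\<^sup>+q. ennreal (?Q2 q) \<partial>lborel)"
        by (rule nn_integral_add) (intro borel_measurable_add mP mQ1 mQ2, rule mQ2)
      also have "(\<integral>\<^sup>+q. (ennreal (?P q) + ennreal (?Q1 q)) \<partial>lborel)
          = (\<integral>\<^sup>+q. ennreal (?P q) \<partial>lborel) + (\<integral>\<^sup>+q. ennreal (?Q1 q) \<partial>lborel)"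
        by (rule nn_integral_add) (rule mP, rule mQ1)
      finally show ?thesis .
    qed
    finally have I1: "(\<integral>\<^sup>+q. ennreal (Wr s a p * (if SA p q then Kr2 k b p q else 0)) \<partial>lborel)
      \<le> ennreal (cA k a b * G) * ((\<integral>\<^sup>+q. ennreal (?P q) \<partial>lborel) + (\<integral>\<^sup>+q. ennreal (?Q1 q) \<partial>lborel) + (\<integral>\<^sup>+q. ennreal (?Q2 q) \<partial>lborel))" .
    have hP: "ennreal \<bar>x\<bar> * (\<integral>\<^sup>+q. ennreal (?P q) \<partial>lborel) \<le> ennreal (2 powr (2*b)) * (2 * Ij (2*b)) * Ij (2*b)"
      by (rule A1[OF x0 b1])
    have hQ1: "ennreal \<bar>x\<bar> * (\<integral>\<^sup>+q. ennreal (?Q1 q) \<partial>lborel) = Ij (2*b) * Ij (2*b)"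
    proof -
      have e: "M1 x1 t1 = jbr (t1 - (- (x1 ^ 2 / 2)))" for x1 t1 by (simp add: M1_def)
      have "ennreal \<bar>x\<bar> * (\<integral>\<^sup>+q. ennreal (jbr (RR x (fst q)) powr (-2*b) * jbr (snd q - (- (fst q ^ 2 / 2))) powr (-2*b)) \<partial>lborel) = Ij (2*b) * Ij (2*b)"
        by (rule A23[OF x0]) measurable
      then show ?thesis by (simp only: e)
    qed
    have hQ2: "ennreal \<bar>x\<bar> * (\<integral>\<^sup>+q. ennreal (?Q2 q) \<partial>lborel) = Ij (2*b) * Ij (2*b)"
    proof -
      have e: "M2 x t x1 t1 = jbr (t1 - (t - (x1 - x)^2/2))" for x1 t1 by (simp add: M2_def algebra_simps)
      have "ennreal \<bar>x\<bar> * (\<integral>\<^sup>+q. ennreal (jbr (RR x (fst q)) powr (-2*b) * jbr (snd q - (t - (fst q - x)^2/2)) powr (-2*b)) \<partial>lborel) = Ij (2*b) * Ij (2*b)"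
        by (rule A23[OF x0]) measurable
      then show ?thesis by (simp only: e)
    qed
    have hsum: "ennreal \<bar>x\<bar> * ((\<integral>\<^sup>+q. ennreal (?P q) \<partial>lborel) + (\<integral>\<^sup>+q. ennreal (?Q1 q) \<partial>lborel) + (\<integral>\<^sup>+q. ennreal (?Q2 q) \<partial>lborel)) \<le> ?Z"
    proof -
      have "ennreal \<bar>x\<bar> * ((\<integral>\<^sup>+q. ennreal (?P q) \<partial>lborel) + (\<integral>\<^sup>+q. ennreal (?Q1 q) \<partial>lborel) + (\<integral>\<^sup>+q. ennreal (?Q2 q) \<partial>lborel))
        = ennreal \<bar>x\<bar> * (\<integral>\<^sup>+q. ennreal (?P q) \<partial>lborel) + ennreal \<bar>x\<bar> * (\<integral>\<^sup>+q. ennreal (?Q1 q) \<partial>lborel) + ennreal \<bar>x\<bar> * (\<integral>\<^sup>+q. ennreal (?Q2 q) \<partial>lborel)"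
        by (simp only: distrib_left)
      also have "\<dots> \<le> ennreal (2 powr (2*b)) * (2 * Ij (2*b)) * Ij (2*b) + Ij (2*b) * Ij (2*b) + Ij (2*b) * Ij (2*b)"
        by (intro add_mono hP eq_refl[OF hQ1] eq_refl[OF hQ2])
      also have "\<dots> = ?Z" by (simp only: mult_2 add.assoc)
      finally show ?thesis .
    qed
    have Gx: "G \<le> 2 * \<bar>x\<bar>"
    proof -
      have "G \<le> jbr x powr 1" unfolding G_def using se by (intro powr_mono) (auto simp: jbr_ge1)
      also have "\<dots> = 1 + \<bar>x\<bar>" by (simp add: jbr_def)
      finally show ?thesis using x1 by simp
    qed
    have "(\<integral>\<^sup>+q. ennreal (Wr s a p * (if SA p q then Kr2 k b p q else 0)) \<partial>lborel)
        \<le> ennreal (cA k a b * G / \<bar>x\<bar>) * (ennreal \<bar>x\<bar> * ((\<integral>\<^sup>+q. ennreal (?P q) \<partial>lborel) + (\<integral>\<^sup>+q. ennreal (?Q1 q) \<partial>lborel) + (\<integral>\<^sup>+q. ennreal (?Q2 q) \<partial>lborel)))"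
    proof -
      have "ennreal (cA k a b * G / \<bar>x\<bar>) * ennreal \<bar>x\<bar> = ennreal (cA k a b * G)"
        using x0 cA0 G0 by (subst ennreal_mult[symmetric]) auto
      then show ?thesis using I1 by (simp add: mult.assoc[symmetric])
    qed
    also have "\<dots> \<le> ennreal (cA k a b * G / \<bar>x\<bar>) * ?Z" by (rule mult_left_mono[OF hsum]) simp
    also have "\<dots> \<le> ennreal (2 * cA k a b) * ?Z"
    proof (rule mult_right_mono)
      have "cA k a b * G / \<bar>x\<bar> \<le> cA k a b * (2 * \<bar>x\<bar>) / \<bar>x\<bar>"
        using Gx cA0 x0 by (intro divide_right_mono mult_left_mono) auto
      also have "\<dots> = 2 * cA k a b" using x0 by simp
      finally show "ennreal (cA k a b * G / \<bar>x\<bar>) \<le> ennreal (2 * cA k a b)" by (rule ennreal_leI)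
    qed simp
    finally show ?thesis unfolding eq .
  qed
qed

lemma comp_powr:
  assumes "jbr u \<le> 2 * jbr v" "jbr v \<le> 2 * jbr u"
  shows "jbr u powr (-2*k) \<le> 2 powr (2*\<bar>k\<bar>) * jbr v powr (-2*k)"
proof (cases "0 \<le> k")
  case True
  have "jbr u powr (-(2*k)) \<le> 2 powr (2*k) * jbr v powr (-(2*k))"
    using assms True by (intro inv_powr_le) (auto simp: jbr_pos)
  then show ?thesis using True by simp
next
  case False
  have "jbr u powr (-2*k) \<le> (2 * jbr v) powr (-2*k)" using assms False by (intro powr_mono2) (auto simp: jbr_nn)
  also have "\<dots> = 2 powr (-2*k) * jbr v powr (-2*k)" by (simp add: powr_mult jbr_nn)
  finally show ?thesis using False by simp
qed

lemma jbr_powr_2s: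
  assumes "\<bar>x\<bar> \<le> \<bar>y\<bar>"
  shows "jbr x powr (2 * s) \<le> jbr y powr (2 * max s 0)"
proof -
  have "jbr x powr (2 * s) \<le> jbr x powr (2 * max s 0)" by (intro powr_mono) (auto simp: jbr_ge1)
  also have "\<dots> \<le> jbr y powr (2 * max s 0)" using assms by (intro jbr_powr_mono) auto
  finally show ?thesis .
qed

lemma jbr_lo_2s: assumes "\<bar>x\<bar> \<le> 1" shows "jbr x powr (2 * s) \<le> 2 powr (2 * \<bar>s\<bar>)"
proof -
  have "jbr x powr (2 * s) \<le> jbr x powr (2 * \<bar>s\<bar>)" by (intro powr_mono) (auto simp: jbr_ge1)
  also have "\<dots> \<le> 2 powr (2 * \<bar>s\<bar>)" using assms by (intro powr_mono2) (auto simp: jbr_def jbr_nn)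
  finally show ?thesis .
qed

lemma mono5:
  fixes a b c d e a' b' c' d' e' :: real
  assumes "0 \<le> a" "a \<le> a'" "0 \<le> b" "b \<le> b'" "0 \<le> c" "c \<le> c'" "0 \<le> d" "d \<le> d'" "0 \<le> e" "e \<le> e'"
  shows "a * b * c * d * e \<le> a' * b' * c' * d' * e'"
proof -
  have "a * b \<le> a' * b'" using assms by (intro mult_mono) auto
  moreover have "0 \<le> a * b" using assms by simp
  ultimately have "a * b * c \<le> a' * b' * c'" using assms by (intro mult_mono) auto
  moreover have "0 \<le> a * b * c" using assms by simp
  ultimately have "a * b * c * d \<le> a' * b' * c' * d'" using assms by (intro mult_mono) auto
  moreover have "0 \<le> a * b * c * d" using assms by simp
  ultimately show ?thesis using assms by (intro mult_mono) auto
qed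

lemma lin_aux1: "2 * (C::real) < B \<Longrightarrow> A \<le> B + C \<Longrightarrow> 0 \<le> C \<Longrightarrow> 1 + A \<le> 2 * (1 + B)" by argo
lemma lin_aux2: "2 * (C::real) < A \<Longrightarrow> B \<le> A + C \<Longrightarrow> 0 \<le> C \<Longrightarrow> 1 + B \<le> 2 * (1 + A)" by argo

definition cLo :: "real \<Rightarrow> real \<Rightarrow> real" where "cLo s k = 2 powr (2 * \<bar>s\<bar>) * 2 powr (2*\<bar>k\<bar>)"
definition cHh :: "real \<Rightarrow> real \<Rightarrow> real" where "cHh k b = 2 powr (2*\<bar>k\<bar>) * 3 powr (2*b)"

lemma B_pw:
  fixes x t x1 t1 :: real
  assumes a0: "0 \<le> a" and b0: "0 \<le> b"
  shows "Wr s a (x, t) * (if SB (x, t) (x1, t1) then Kr2 k b (x, t) (x1, t1) else 0)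
    \<le> (if \<bar>x\<bar> \<le> 1 then cLo s k * jbr x1 powr (-4*k) * jbr t powr (-2*a) * M2 x t x1 t1 powr (-2*b) else 0)
     + (if 2 \<le> \<bar>x1\<bar> then cHh k b * jbr x1 powr (2 * max s 0 - 4*k) * jbr (x1 * x / 2) powr (-2*b) * M2 x t x1 t1 powr (-2*b) else 0)"
proof -
  let ?J1 = "jbr x1 powr (-2*k)"
  let ?J2 = "jbr (x1 - x) powr (-2*k)"
  let ?P1 = "M1 x1 t1 powr (-2*b)"
  let ?P2 = "M2 x t x1 t1 powr (-2*b)"
  let ?T = "jbr t powr (-2*a)"
  have nnl: "0 \<le> (if \<bar>x\<bar> \<le> 1 then cLo s k * jbr x1 powr (-4*k) * jbr t powr (-2*a) * M2 x t x1 t1 powr (-2*b) else 0)"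
    by (simp add: cLo_def)
  have nnh: "0 \<le> (if 2 \<le> \<bar>x1\<bar> then cHh k b * jbr x1 powr (2 * max s 0 - 4*k) * jbr (x1 * x / 2) powr (-2*b) * M2 x t x1 t1 powr (-2*b) else 0)"
    by (simp add: cHh_def)
  have e: "Wr s a (x, t) * Kr2 k b (x, t) (x1, t1) = jbr x powr (2 * s) * ?T * (?J1 * ?J2) * ?P1 * ?P2"
    by (simp add: Wr_def Kr2_def mult_ac)
  have T1: "?T \<le> 1" using a0 by (intro jbr_powr_le1) auto
  have P11: "?P1 \<le> 1" using b0 by (simp add: M1_def jbr_powr_le1)
  show ?thesis
  proof (cases "SB (x, t) (x1, t1)")
    case False
    then show ?thesis using nnl nnh by simp
  next
    case True
    show ?thesis
    proof (cases "\<bar>x\<bar> < 1")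
      case lo: True
      have c1: "jbr (x1 - x) \<le> 2 * jbr x1"
      proof -
        have "jbr (x1 - x) \<le> jbr x1 * jbr x" by (rule jbr_diff_le)
        also have "\<dots> \<le> jbr x1 * 2" using lo jbr_ge1[of x1] by (intro mult_left_mono) (auto simp: jbr_def)
        finally show ?thesis by simp
      qed
      have c2: "jbr x1 \<le> 2 * jbr (x1 - x)"
      proof -
        have "jbr x1 \<le> jbr (x1 - x) * jbr x" by (rule jbr_le_prod) linarith
        also have "\<dots> \<le> jbr (x1 - x) * 2" using lo by (intro mult_left_mono) (auto simp: jbr_def)
        finally show ?thesis by simp
      qed
      have J: "?J1 * ?J2 \<le> 2 powr (2*\<bar>k\<bar>) * jbr x1 powr (-4*k)"
      proof -
        have "?J2 \<le> 2 powr (2*\<bar>k\<bar>) * ?J1" by (rule comp_powr[OF c1 c2])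
        then have "?J1 * ?J2 \<le> ?J1 * (2 powr (2*\<bar>k\<bar>) * ?J1)" by (intro mult_left_mono) auto
        also have "\<dots> = 2 powr (2*\<bar>k\<bar>) * jbr x1 powr (-4*k)" by (simp add: powr_add[symmetric] mult_ac)
        finally show ?thesis .
      qed
      have X: "jbr x powr (2 * s) \<le> 2 powr (2 * \<bar>s\<bar>)" using lo by (intro jbr_lo_2s) auto
      have "Wr s a (x, t) * Kr2 k b (x, t) (x1, t1) \<le> 2 powr (2 * \<bar>s\<bar>) * ?T * (2 powr (2*\<bar>k\<bar>) * jbr x1 powr (-4*k)) * 1 * ?P2"
        unfolding e using X J P11 by (intro mono5) auto
      also have "\<dots> = cLo s k * jbr x1 powr (-4*k) * jbr t powr (-2*a) * M2 x t x1 t1 powr (-2*b)"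
        by (simp add: cLo_def mult_ac)
      finally show ?thesis using True lo nnh by simp
    next
      case nlo: False
      with True have S: "\<not> (M1 x1 t1 \<le> jbr t \<and> M2 x t x1 t1 \<le> jbr t)" "2 * \<bar>x\<bar> < \<bar>x1\<bar>" "2 * \<bar>x\<bar> < \<bar>x1 - x\<bar>"
          "M2 x t x1 t1 \<le> M1 x1 t1"
        unfolding SB_def lo_def domI_def HH_def by auto
      have x12: "2 \<le> \<bar>x1\<bar>" using S nlo by linarith
      have "max (jbr t) (max (M1 x1 t1) (M2 x t x1 t1)) = M1 x1 t1" using S by auto
      then have jr: "jbr (RR x x1) \<le> 3 * M1 x1 t1" using jRR[of x x1 t t1] by simp
      have Rlow: "\<bar>x1 * x / 2\<bar> \<le> \<bar>RR x x1\<bar>"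
      proof -
        have e2: "RR x x1 = x * (2 * x1 - x) / 2" by (simp add: RR_def power2_eq_square algebra_simps)
        have "\<bar>x1\<bar> \<le> \<bar>2 * x1 - x\<bar>" using S by linarith
        then have "\<bar>x\<bar> * \<bar>x1\<bar> \<le> \<bar>x\<bar> * \<bar>2 * x1 - x\<bar>" by (intro mult_left_mono) auto
        then show ?thesis unfolding e2 by (simp add: abs_mult mult.commute)
      qed
      have P1b: "?P1 \<le> 3 powr (2*b) * jbr (x1 * x / 2) powr (-2*b)"
      proof -
        have "M1 x1 t1 powr (-(2*b)) \<le> 3 powr (2*b) * jbr (RR x x1) powr (-(2*b))"
          using jr b0 by (intro inv_powr_le) (auto simp: jbr_pos M1_pos)
        also have "jbr (RR x x1) powr (-(2*b)) \<le> jbr (x1 * x / 2) powr (-(2*b))"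
          using Rlow b0 by (intro jbr_powr_anti) auto
        finally show ?thesis by (simp add: mult_left_mono)
      qed
      have tri1: "\<bar>x1 - x\<bar> \<le> \<bar>x1\<bar> + \<bar>x\<bar>" by (rule abs_triangle_ineq4)
      have tri2: "\<bar>x1\<bar> \<le> \<bar>x1 - x\<bar> + \<bar>x\<bar>" by linarith
      have c1: "jbr (x1 - x) \<le> 2 * jbr x1" using S(2) tri1 abs_ge_zero[of x] unfolding jbr_def by (rule lin_aux1)
      have c2: "jbr x1 \<le> 2 * jbr (x1 - x)" using S(3) tri2 abs_ge_zero[of x] unfolding jbr_def by (rule lin_aux2)
      have J: "?J1 * ?J2 \<le> 2 powr (2*\<bar>k\<bar>) * jbr x1 powr (-4*k)"
      proof -
        have "?J2 \<le> 2 powr (2*\<bar>k\<bar>) * ?J1" by (rule comp_powr[OF c1 c2])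
        then have "?J1 * ?J2 \<le> ?J1 * (2 powr (2*\<bar>k\<bar>) * ?J1)" by (intro mult_left_mono) auto
        also have "\<dots> = 2 powr (2*\<bar>k\<bar>) * jbr x1 powr (-4*k)" by (simp add: powr_add[symmetric] mult_ac)
        finally show ?thesis .
      qed
      have X: "jbr x powr (2 * s) \<le> jbr x1 powr (2 * max s 0)" using S by (intro jbr_powr_2s) auto
      have "Wr s a (x, t) * Kr2 k b (x, t) (x1, t1) \<le> jbr x1 powr (2 * max s 0) * 1 * (2 powr (2*\<bar>k\<bar>) * jbr x1 powr (-4*k)) * (3 powr (2*b) * jbr (x1 * x / 2) powr (-2*b)) * ?P2"
        unfolding e using X J P1b T1 by (intro mono5) auto
      also have "\<dots> = cHh k b * (jbr x1 powr (2 * max s 0) * jbr x1 powr (-4*k)) * jbr (x1 * x / 2) powr (-2*b) * ?P2"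
        by (simp add: cHh_def mult_ac)
      also have "jbr x1 powr (2 * max s 0) * jbr x1 powr (-4*k) = jbr x1 powr (2 * max s 0 - 4*k)"
        by (simp add: powr_add[symmetric])
      finally show ?thesis using True x12 nnl by simp
    qed
  qed
qed

lemma BLo:
  assumes a0: "0 \<le> a" and a1: "2*a \<le> 1" and ak: "0 < 2*a + 4*k" and b1: "1 < 2*b"
  shows "(\<integral>\<^sup>+p. ennreal (if \<bar>fst p\<bar> \<le> 1 then cLo s k * jbr x1 powr (-4*k) * jbr (snd p) powr (-2*a) * M2 (fst p) (snd p) x1 t1 powr (-2*b) else 0) \<partial>lborel)
    \<le> ennreal (cLo s k * 2 powr (4*a)) * (2 * Ij (2*b)) * (4 * (Ij (1 + 2*a + 4*k) + 2))"
proof -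
  define C1 where "C1 = cLo s k * jbr x1 powr (-4*k) * 2 powr (4*a)"
  have C10: "0 \<le> C1" unfolding C1_def cLo_def by simp
  define lam where "lam = t1 + x1^2/2"
  have m: "(\<lambda>p. ennreal (if \<bar>fst p\<bar> \<le> 1 then cLo s k * jbr x1 powr (-4*k) * jbr (snd p) powr (-2*a) * M2 (fst p) (snd p) x1 t1 powr (-2*b) else 0))
      \<in> borel_measurable (lborel \<Otimes>\<^sub>M lborel)"
    unfolding M2_def by measurable
  have inner: "(\<integral>\<^sup>+t. ennreal (if \<bar>x\<bar> \<le> 1 then cLo s k * jbr x1 powr (-4*k) * jbr t powr (-2*a) * M2 x t x1 t1 powr (-2*b) else 0) \<partial>lborel)
      \<le> ennreal C1 * (2 * Ij (2*b)) * ennreal (indicator {-1..1} x * jbr (lam - x * x1) powr (-(2*a)))" for x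
  proof (cases "\<bar>x\<bar> \<le> 1")
    case False
    then show ?thesis by simp
  next
    case True
    define gam where "gam = t1 + (x1 - x)^2/2"
    define c0 where "c0 = cLo s k * jbr x1 powr (-4*k)"
    have c00: "0 \<le> c0" unfolding c0_def cLo_def by simp
    have eM: "M2 x t x1 t1 = jbr (t - gam)" for t unfolding M2_def gam_def by (subst jbr_diff_comm) (simp add: algebra_simps)
    have "(\<integral>\<^sup>+t. ennreal (if \<bar>x\<bar> \<le> 1 then cLo s k * jbr x1 powr (-4*k) * jbr t powr (-2*a) * M2 x t x1 t1 powr (-2*b) else 0) \<partial>lborel)
        = (\<integral>\<^sup>+t. ennreal c0 * ennreal (jbr (t - gam) powr (-(2*b)) * jbr (t - 0) powr (-(2*a))) \<partial>lborel)"
      using True c00 by (intro nn_integral_cong) (simp add: eM c0_def ennreal_mult[symmetric] mult_ac)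
    also have "\<dots> = ennreal c0 * (\<integral>\<^sup>+t. ennreal (jbr (t - gam) powr (-(2*b)) * jbr (t - 0) powr (-(2*a))) \<partial>lborel)"
      by (rule nn_integral_cmult) measurable
    also have "\<dots> \<le> ennreal c0 * (ennreal (2 powr (2*a) * jbr (gam - 0) powr (-(2*a))) * (2 * Ij (2*b)))"
      using a0 a1 b1 by (intro mult_left_mono conv_bound) auto
    also have "\<dots> \<le> ennreal c0 * (ennreal (2 powr (2*a) * (2 powr (2*a) * jbr (lam - x * x1) powr (-(2*a)))) * (2 * Ij (2*b)))"
    proof -
      have "jbr (lam - x * x1) \<le> 2 * jbr gam"
      proof -
        have "lam - x * x1 = gam - x^2/2" unfolding lam_def gam_def by (simp add: power2_eq_square field_simps)
        then have "jbr (lam - x * x1) \<le> jbr gam * jbr (x^2/2)" using jbr_diff_le by simp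
        also have "\<dots> \<le> jbr gam * 2"
        proof -
          have "x^2 \<le> 1" using True by (simp add: abs_le_square_iff power2_eq_square) (metis abs_mult_self_eq mult_le_one abs_ge_zero)
          then show ?thesis by (intro mult_left_mono) (auto simp: jbr_def jbr_nn)
        qed
        finally show ?thesis by simp
      qed
      then have "jbr gam powr (-(2*a)) \<le> 2 powr (2*a) * jbr (lam - x * x1) powr (-(2*a))"
        using a0 by (intro inv_powr_le) (auto simp: jbr_pos)
      then show ?thesis by (intro mult_left_mono mult_right_mono ennreal_leI) auto
    qed
    also have "\<dots> = ennreal C1 * (2 * Ij (2*b)) * ennreal (indicator {-1..1} x * jbr (lam - x * x1) powr (-(2*a)))"
    proof -
      let ?J = "jbr (lam - x * x1) powr (-(2*a))"
      have ind: "indicator {-1..1} x = (1::real)" using True by (auto simp: indicator_def)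
      have "(4::real) * a = 2*a + 2*a" by simp
      then have p4: "2 powr (4*a) = 2 powr (2*a) * 2 powr (2*a)" by (simp only: powr_add)
      have r: "c0 * (2 powr (2*a) * (2 powr (2*a) * ?J)) = C1 * ?J" unfolding C1_def c0_def p4 by (simp add: mult_ac)
      have "ennreal c0 * (ennreal (2 powr (2*a) * (2 powr (2*a) * ?J)) * (2 * Ij (2*b)))
          = ennreal (c0 * (2 powr (2*a) * (2 powr (2*a) * ?J))) * (2 * Ij (2*b))"
        using c00 by (simp add: ennreal_mult mult.assoc)
      also have "\<dots> = ennreal C1 * ennreal ?J * (2 * Ij (2*b))" unfolding r using C10 by (simp add: ennreal_mult)
      also have "\<dots> = ennreal C1 * (2 * Ij (2*b)) * ennreal (indicator {-1..1} x * ?J)" unfolding ind by (simp add: mult_ac)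
      finally show ?thesis .
    qed
    finally show ?thesis .
  qed
  have "(\<integral>\<^sup>+p. ennreal (if \<bar>fst p\<bar> \<le> 1 then cLo s k * jbr x1 powr (-4*k) * jbr (snd p) powr (-2*a) * M2 (fst p) (snd p) x1 t1 powr (-2*b) else 0) \<partial>lborel)
      = (\<integral>\<^sup>+x. (\<integral>\<^sup>+t. ennreal (if \<bar>x\<bar> \<le> 1 then cLo s k * jbr x1 powr (-4*k) * jbr t powr (-2*a) * M2 x t x1 t1 powr (-2*b) else 0) \<partial>lborel) \<partial>lborel)"
    using iter2[OF m] by (simp only: fst_conv snd_conv)
  also have "\<dots> \<le> (\<integral>\<^sup>+x. ennreal C1 * (2 * Ij (2*b)) * ennreal (indicator {-1..1} x * jbr (lam - x * x1) powr (-(2*a))) \<partial>lborel)"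
    by (rule nn_integral_mono) (rule inner)
  also have "\<dots> = ennreal C1 * (2 * Ij (2*b)) * (\<integral>\<^sup>+x. ennreal (indicator {-1..1} x * jbr (lam - x * x1) powr (-(2*a))) \<partial>lborel)"
    by (rule nn_integral_cmult) measurable
  also have "\<dots> \<le> ennreal C1 * (2 * Ij (2*b)) * (ennreal (jbr x1 powr ((1 + 2*a + 4*k) - 1 - 2*a)) * (4 * (Ij (1 + 2*a + 4*k) + 2)))"
    using a0 a1 ak by (intro mult_left_mono lin_bound) auto
  also have "\<dots> = ennreal (C1 * jbr x1 powr (4*k)) * (2 * Ij (2*b)) * (4 * (Ij (1 + 2*a + 4*k) + 2))"
    using C10 by (simp add: ennreal_mult mult_ac)
  also have "C1 * jbr x1 powr (4*k) = cLo s k * 2 powr (4*a)"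
    unfolding C1_def using jbr_pos[of x1] by (simp add: powr_add[symmetric] mult_ac)
  finally show ?thesis .
qed

lemma BHh:
  assumes b1: "1 < 2*b" and sk: "2 * max s 0 - 4*k \<le> 1"
  shows "(\<integral>\<^sup>+p. ennreal (if 2 \<le> \<bar>x1\<bar> then cHh k b * jbr x1 powr (2 * max s 0 - 4*k) * jbr (x1 * fst p / 2) powr (-2*b) * M2 (fst p) (snd p) x1 t1 powr (-2*b) else 0) \<partial>lborel)
    \<le> ennreal (3 * cHh k b) * (Ij (2*b) * Ij (2*b))"
proof (cases "2 \<le> \<bar>x1\<bar>")
  case False
  then show ?thesis by simp
next
  case True
  define D where "D = cHh k b * jbr x1 powr (2 * max s 0 - 4*k)"
  have D0: "0 \<le> D" unfolding D_def cHh_def by simp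
  have m: "(\<lambda>p. ennreal (if 2 \<le> \<bar>x1\<bar> then cHh k b * jbr x1 powr (2 * max s 0 - 4*k) * jbr (x1 * fst p / 2) powr (-2*b) * M2 (fst p) (snd p) x1 t1 powr (-2*b) else 0))
      \<in> borel_measurable (lborel \<Otimes>\<^sub>M lborel)"
    unfolding M2_def by measurable
  have "(\<integral>\<^sup>+p. ennreal (if 2 \<le> \<bar>x1\<bar> then cHh k b * jbr x1 powr (2 * max s 0 - 4*k) * jbr (x1 * fst p / 2) powr (-2*b) * M2 (fst p) (snd p) x1 t1 powr (-2*b) else 0) \<partial>lborel)
      = (\<integral>\<^sup>+x. (\<integral>\<^sup>+t. ennreal (if 2 \<le> \<bar>x1\<bar> then cHh k b * jbr x1 powr (2 * max s 0 - 4*k) * jbr (x1 * x / 2) powr (-2*b) * M2 x t x1 t1 powr (-2*b) else 0) \<partial>lborel) \<partial>lborel)"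
    using iter2[OF m] by (simp only: fst_conv snd_conv)
  also have "\<dots> = (\<integral>\<^sup>+x. ennreal (D * jbr (x1 * x / 2) powr (-2*b)) * Ij (2*b) \<partial>lborel)"
  proof (rule nn_integral_cong)
    fix x
    have eM: "M2 x t x1 t1 = jbr (t - (t1 + (x1 - x)^2/2))" for t unfolding M2_def by (subst jbr_diff_comm) (simp add: algebra_simps)
    have "(\<integral>\<^sup>+t. ennreal (if 2 \<le> \<bar>x1\<bar> then cHh k b * jbr x1 powr (2 * max s 0 - 4*k) * jbr (x1 * x / 2) powr (-2*b) * M2 x t x1 t1 powr (-2*b) else 0) \<partial>lborel)
        = (\<integral>\<^sup>+t. ennreal (D * jbr (x1 * x / 2) powr (-2*b)) * ennreal (jbr (t - (t1 + (x1 - x)^2/2)) powr (-2*b)) \<partial>lborel)"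
      using True D0 by (intro nn_integral_cong) (simp add: eM D_def ennreal_mult[symmetric])
    also have "\<dots> = ennreal (D * jbr (x1 * x / 2) powr (-2*b)) * (\<integral>\<^sup>+t. ennreal (jbr (t - (t1 + (x1 - x)^2/2)) powr (-2*b)) \<partial>lborel)"
      by (rule nn_integral_cmult) measurable
    also have "(\<integral>\<^sup>+t. ennreal (jbr (t - (t1 + (x1 - x)^2/2)) powr (-2*b)) \<partial>lborel) = Ij (2*b)"
      using Ij_shift[of "t1 + (x1 - x)^2/2" "2*b"] by simp
    finally show "(\<integral>\<^sup>+t. ennreal (if 2 \<le> \<bar>x1\<bar> then cHh k b * jbr x1 powr (2 * max s 0 - 4*k) * jbr (x1 * x / 2) powr (-2*b) * M2 x t x1 t1 powr (-2*b) else 0) \<partial>lborel)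
        = ennreal (D * jbr (x1 * x / 2) powr (-2*b)) * Ij (2*b)" .
  qed
  also have "\<dots> = (\<integral>\<^sup>+x. ennreal D * ennreal (jbr (0 + (x1 / 2) * x) powr (-(2*b))) \<partial>lborel) * Ij (2*b)"
    by (subst nn_integral_multc) (measurable, use D0 in \<open>simp add: ennreal_mult mult_ac\<close>)
  also have "(\<integral>\<^sup>+x. ennreal D * ennreal (jbr (0 + (x1 / 2) * x) powr (-(2*b))) \<partial>lborel)
      = ennreal D * (\<integral>\<^sup>+x. ennreal (jbr (0 + (x1 / 2) * x) powr (-(2*b))) \<partial>lborel)"
    by (rule nn_integral_cmult) measurable
  also have "\<dots> = ennreal (D / \<bar>x1 / 2\<bar>) * (ennreal \<bar>x1 / 2\<bar> * (\<integral>\<^sup>+x. ennreal (jbr (0 + (x1 / 2) * x) powr (-(2*b))) \<partial>lborel))"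
  proof -
    have "ennreal (D / \<bar>x1 / 2\<bar>) * ennreal \<bar>x1 / 2\<bar> = ennreal D"
      using True D0 by (subst ennreal_mult[symmetric]) auto
    then show ?thesis by (simp add: mult.assoc[symmetric])
  qed
  also have "ennreal \<bar>x1 / 2\<bar> * (\<integral>\<^sup>+x. ennreal (jbr (0 + (x1 / 2) * x) powr (-(2*b))) \<partial>lborel) = Ij (2*b)"
    by (rule Ij_affine) (use True in auto)
  also have "ennreal (D / \<bar>x1 / 2\<bar>) * Ij (2*b) * Ij (2*b) \<le> ennreal (3 * cHh k b) * Ij (2*b) * Ij (2*b)"
  proof (intro mult_right_mono ennreal_leI)
    have "jbr x1 powr (2 * max s 0 - 4*k) \<le> jbr x1 powr 1" using sk by (intro powr_mono) (auto simp: jbr_ge1)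
    also have "\<dots> = 1 + \<bar>x1\<bar>" by (simp add: jbr_def)
    finally have j: "jbr x1 powr (2 * max s 0 - 4*k) \<le> 1 + \<bar>x1\<bar>" .
    have "D / \<bar>x1 / 2\<bar> = cHh k b * (jbr x1 powr (2 * max s 0 - 4*k) * 2 / \<bar>x1\<bar>)" unfolding D_def by simp
    also have "\<dots> \<le> cHh k b * ((1 + \<bar>x1\<bar>) * 2 / \<bar>x1\<bar>)"
      using j True by (intro mult_left_mono divide_right_mono mult_right_mono) (auto simp: cHh_def)
    also have "\<dots> \<le> cHh k b * 3"
      using True by (intro mult_left_mono) (auto simp: cHh_def divide_simps)
    finally show "D / \<bar>x1 / 2\<bar> \<le> 3 * cHh k b" by simp
  qed auto
  finally show ?thesis by (simp add: mult.assoc)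
qed

lemma B_bound:
  assumes a0: "0 \<le> a" and a1: "2*a \<le> 1" and ak: "0 < 2*a + 4*k" and b1: "1 < 2*b" and sk: "2 * max s 0 - 4*k \<le> 1"
  shows "(\<integral>\<^sup>+p. ennreal (Wr s a p * (if SB p q then Kr2 k b p q else 0)) \<partial>lborel)
    \<le> ennreal (cLo s k * 2 powr (4*a)) * (2 * Ij (2*b)) * (4 * (Ij (1 + 2*a + 4*k) + 2)) + ennreal (3 * cHh k b) * (Ij (2*b) * Ij (2*b))"
proof -
  obtain x1 t1 where q: "q = (x1, t1)" by (cases q)
  let ?L = "\<lambda>p::real\<times>real. (if \<bar>fst p\<bar> \<le> 1 then cLo s k * jbr x1 powr (-4*k) * jbr (snd p) powr (-2*a) * M2 (fst p) (snd p) x1 t1 powr (-2*b) else 0)"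
  let ?H = "\<lambda>p::real\<times>real. (if 2 \<le> \<bar>x1\<bar> then cHh k b * jbr x1 powr (2 * max s 0 - 4*k) * jbr (x1 * fst p / 2) powr (-2*b) * M2 (fst p) (snd p) x1 t1 powr (-2*b) else 0)"
  have b0: "0 \<le> b" using b1 by simp
  have pw: "ennreal (Wr s a p * (if SB p q then Kr2 k b p q else 0)) \<le> ennreal (?L p) + ennreal (?H p)" for p
  proof -
    obtain x t where p: "p = (x, t)" by (cases p)
    have h: "Wr s a p * (if SB p q then Kr2 k b p q else 0) \<le> ?L p + ?H p"
      using B_pw[OF a0 b0, of s x t x1 t1 k] unfolding p q by (simp only: fst_conv snd_conv)
    have "?L p \<ge> 0" by (simp add: cLo_def)
    moreover have "?H p \<ge> 0" by (simp add: cHh_def)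
    ultimately show ?thesis using ennreal_leI[OF h] by (simp add: ennreal_plus)
  qed
  have mL: "(\<lambda>p. ennreal (?L p)) \<in> borel_measurable lborel" unfolding M2_def by (rule meas_lp) measurable
  have mH: "(\<lambda>p. ennreal (?H p)) \<in> borel_measurable lborel" unfolding M2_def by (rule meas_lp) measurable
  have "(\<integral>\<^sup>+p. ennreal (Wr s a p * (if SB p q then Kr2 k b p q else 0)) \<partial>lborel)
      \<le> (\<integral>\<^sup>+p. ennreal (?L p) + ennreal (?H p) \<partial>lborel)"
    by (rule nn_integral_mono) (rule pw)
  also have "\<dots> = (\<integral>\<^sup>+p. ennreal (?L p) \<partial>lborel) + (\<integral>\<^sup>+p. ennreal (?H p) \<partial>lborel)"
    by (rule nn_integral_add) (rule mL, rule mH)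
  also have "\<dots> \<le> ennreal (cLo s k * 2 powr (4*a)) * (2 * Ij (2*b)) * (4 * (Ij (1 + 2*a + 4*k) + 2)) + ennreal (3 * cHh k b) * (Ij (2*b) * Ij (2*b))"
    by (intro add_mono BLo[OF a0 a1 ak b1] BHh[OF b1 sk])
  finally show ?thesis .
qed

lemma C_pw:
  fixes x t y u :: real
  assumes a0: "0 \<le> a" and b0: "0 \<le> b"
  shows "Wr s a (x, t) * (if SC (x, t) ((x, t) + (y, u)) then Kr2 k b (x, t) ((x, t) + (y, u)) else 0)
    \<le> (if 2 \<le> \<bar>y\<bar> then cHh k b * jbr y powr (2 * max s 0 - 4*k) * jbr (y * x / 2) powr (-2*b) * jbr (t - (- (u + (x + y)^2/2))) powr (-2*b) else 0)"
proof (cases "SC (x, t) ((x, t) + (y, u))")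
  case False
  then show ?thesis by (simp add: cHh_def)
next
  case True
  let ?m1 = "M1 (x + y) (t + u)"
  let ?m2 = "M2 x t (x + y) (t + u)"
  have S: "\<not> \<bar>x\<bar> < 1" "\<not> (?m1 \<le> jbr t \<and> ?m2 \<le> jbr t)" "2 * \<bar>x\<bar> < \<bar>x + y\<bar>" "2 * \<bar>x\<bar> < \<bar>y\<bar>" "?m1 < ?m2"
    using True unfolding SC_def lo_def domI_def HH_def by auto
  have y2: "2 \<le> \<bar>y\<bar>" using S by linarith
  have "max (jbr t) (max ?m1 ?m2) = ?m2" using S by auto
  then have jr: "jbr (RR x (x + y)) \<le> 3 * ?m2" using jRR[of x "x + y" t "t + u"] by simp
  have Rlow: "\<bar>y * x / 2\<bar> \<le> \<bar>RR x (x + y)\<bar>"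
  proof -
    have e2: "RR x (x + y) = x * (x + 2 * y) / 2" by (simp add: RR_def power2_eq_square algebra_simps)
    have t1: "2 * \<bar>y\<bar> \<le> \<bar>x + 2 * y\<bar> + \<bar>x\<bar>" using abs_triangle_ineq4[of "x + 2*y" x] by simp
    have "\<bar>y\<bar> \<le> \<bar>x + 2 * y\<bar>" using S(4) t1 abs_ge_zero[of x] by argo
    then have "\<bar>x\<bar> * \<bar>y\<bar> \<le> \<bar>x\<bar> * \<bar>x + 2 * y\<bar>" by (intro mult_left_mono) auto
    then show ?thesis unfolding e2 by (simp add: abs_mult mult.commute)
  qed
  have P2b: "?m2 powr (-2*b) \<le> 3 powr (2*b) * jbr (y * x / 2) powr (-2*b)"
  proof -
    have "?m2 powr (-(2*b)) \<le> 3 powr (2*b) * jbr (RR x (x + y)) powr (-(2*b))"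
      using jr b0 by (intro inv_powr_le) (auto simp: jbr_pos M2_pos)
    also have "jbr (RR x (x + y)) powr (-(2*b)) \<le> jbr (y * x / 2) powr (-(2*b))"
      using Rlow b0 by (intro jbr_powr_anti) auto
    finally show ?thesis by (simp add: mult_left_mono)
  qed
  have tri1: "\<bar>x + y\<bar> \<le> \<bar>y\<bar> + \<bar>x\<bar>" by linarith
  have tri2: "\<bar>y\<bar> \<le> \<bar>x + y\<bar> + \<bar>x\<bar>" by linarith
  have c1: "jbr (x + y) \<le> 2 * jbr y" using S(4) tri1 abs_ge_zero[of x] unfolding jbr_def by (rule lin_aux1)
  have c2: "jbr y \<le> 2 * jbr (x + y)" using S(3) tri2 abs_ge_zero[of x] unfolding jbr_def by (rule lin_aux2)
  have J: "jbr (x + y) powr (-2*k) * jbr y powr (-2*k) \<le> 2 powr (2*\<bar>k\<bar>) * jbr y powr (-4*k)"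
  proof -
    have "jbr (x + y) powr (-2*k) \<le> 2 powr (2*\<bar>k\<bar>) * jbr y powr (-2*k)" by (rule comp_powr[OF c1 c2])
    then have "jbr (x + y) powr (-2*k) * jbr y powr (-2*k) \<le> (2 powr (2*\<bar>k\<bar>) * jbr y powr (-2*k)) * jbr y powr (-2*k)"
      by (intro mult_right_mono) auto
    also have "\<dots> = 2 powr (2*\<bar>k\<bar>) * jbr y powr (-4*k)" by (simp add: powr_add[symmetric] mult_ac)
    finally show ?thesis .
  qed
  have X: "jbr x powr (2 * s) \<le> jbr y powr (2 * max s 0)" using S by (intro jbr_powr_2s) auto
  have T1: "jbr t powr (-2*a) \<le> 1" using a0 by (intro jbr_powr_le1) auto
  have e: "Wr s a (x, t) * Kr2 k b (x, t) ((x, t) + (y, u))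
      = jbr x powr (2 * s) * jbr t powr (-2*a) * (jbr (x + y) powr (-2*k) * jbr y powr (-2*k)) * ?m2 powr (-2*b) * ?m1 powr (-2*b)"
    by (simp add: Wr_def Kr2_def mult_ac)
  have "Wr s a (x, t) * Kr2 k b (x, t) ((x, t) + (y, u)) \<le> jbr y powr (2 * max s 0) * 1 * (2 powr (2*\<bar>k\<bar>) * jbr y powr (-4*k)) * (3 powr (2*b) * jbr (y * x / 2) powr (-2*b)) * ?m1 powr (-2*b)"
    unfolding e using X J P2b T1 by (intro mono5) auto
  also have "\<dots> = cHh k b * (jbr y powr (2 * max s 0) * jbr y powr (-4*k)) * jbr (y * x / 2) powr (-2*b) * ?m1 powr (-2*b)"
    by (simp add: cHh_def mult_ac)
  also have "jbr y powr (2 * max s 0) * jbr y powr (-4*k) = jbr y powr (2 * max s 0 - 4*k)"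
    by (simp add: powr_add[symmetric])
  also have "?m1 = jbr (t - (- (u + (x + y)^2/2)))" by (simp add: M1_def algebra_simps)
  finally show ?thesis using True y2 by simp
qed

lemma CHh:
  assumes b1: "1 < 2*b" and sk: "2 * max s 0 - 4*k \<le> 1"
  shows "(\<integral>\<^sup>+p. ennreal (if 2 \<le> \<bar>zz\<bar> then cHh k b * jbr zz powr (2 * max s 0 - 4*k) * jbr (zz * fst p / 2) powr (-2*b) * jbr (snd p - (- (u + (fst p + ww)^2/2))) powr (-2*b) else 0) \<partial>lborel)
    \<le> ennreal (3 * cHh k b) * (Ij (2*b) * Ij (2*b))"
proof (cases "2 \<le> \<bar>zz\<bar>")
  case False
  then show ?thesis by simp
next
  case True
  define D where "D = cHh k b * jbr zz powr (2 * max s 0 - 4*k)"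
  have D0: "0 \<le> D" unfolding D_def cHh_def by simp
  have m: "(\<lambda>p. ennreal (if 2 \<le> \<bar>zz\<bar> then cHh k b * jbr zz powr (2 * max s 0 - 4*k) * jbr (zz * fst p / 2) powr (-2*b) * jbr (snd p - (- (u + (fst p + ww)^2/2))) powr (-2*b) else 0))
      \<in> borel_measurable (lborel \<Otimes>\<^sub>M lborel)"
    by measurable
  have "(\<integral>\<^sup>+p. ennreal (if 2 \<le> \<bar>zz\<bar> then cHh k b * jbr zz powr (2 * max s 0 - 4*k) * jbr (zz * fst p / 2) powr (-2*b) * jbr (snd p - (- (u + (fst p + ww)^2/2))) powr (-2*b) else 0) \<partial>lborel)
      = (\<integral>\<^sup>+x. (\<integral>\<^sup>+t. ennreal (if 2 \<le> \<bar>zz\<bar> then cHh k b * jbr zz powr (2 * max s 0 - 4*k) * jbr (zz * x / 2) powr (-2*b) * jbr (t - (- (u + (x + ww)^2/2))) powr (-2*b) else 0) \<partial>lborel) \<partial>lborel)"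
    using iter2[OF m] by (simp only: fst_conv snd_conv)
  also have "\<dots> = (\<integral>\<^sup>+x. ennreal (D * jbr (zz * x / 2) powr (-2*b)) * Ij (2*b) \<partial>lborel)"
  proof (rule nn_integral_cong)
    fix x
    have "(\<integral>\<^sup>+t. ennreal (if 2 \<le> \<bar>zz\<bar> then cHh k b * jbr zz powr (2 * max s 0 - 4*k) * jbr (zz * x / 2) powr (-2*b) * jbr (t - (- (u + (x + ww)^2/2))) powr (-2*b) else 0) \<partial>lborel)
        = (\<integral>\<^sup>+t. ennreal (D * jbr (zz * x / 2) powr (-2*b)) * ennreal (jbr (t - (- (u + (x + ww)^2/2))) powr (-2*b)) \<partial>lborel)"
      using True D0 by (intro nn_integral_cong) (simp add: D_def ennreal_mult[symmetric])
    also have "\<dots> = ennreal (D * jbr (zz * x / 2) powr (-2*b)) * (\<integral>\<^sup>+t. ennreal (jbr (t - (- (u + (x + ww)^2/2))) powr (-2*b)) \<partial>lborel)"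
      by (rule nn_integral_cmult) measurable
    also have "(\<integral>\<^sup>+t. ennreal (jbr (t - (- (u + (x + ww)^2/2))) powr (-2*b)) \<partial>lborel) = Ij (2*b)"
      using Ij_shift[of "- (u + (x + ww)^2/2)" "2*b"] by simp
    finally show "(\<integral>\<^sup>+t. ennreal (if 2 \<le> \<bar>zz\<bar> then cHh k b * jbr zz powr (2 * max s 0 - 4*k) * jbr (zz * x / 2) powr (-2*b) * jbr (t - (- (u + (x + ww)^2/2))) powr (-2*b) else 0) \<partial>lborel)
        = ennreal (D * jbr (zz * x / 2) powr (-2*b)) * Ij (2*b)" .
  qed
  also have "\<dots> = (\<integral>\<^sup>+x. ennreal D * ennreal (jbr (0 + (zz / 2) * x) powr (-(2*b))) \<partial>lborel) * Ij (2*b)"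
    by (subst nn_integral_multc) (measurable, use D0 in \<open>simp add: ennreal_mult mult_ac\<close>)
  also have "(\<integral>\<^sup>+x. ennreal D * ennreal (jbr (0 + (zz / 2) * x) powr (-(2*b))) \<partial>lborel)
      = ennreal D * (\<integral>\<^sup>+x. ennreal (jbr (0 + (zz / 2) * x) powr (-(2*b))) \<partial>lborel)"
    by (rule nn_integral_cmult) measurable
  also have "\<dots> = ennreal (D / \<bar>zz / 2\<bar>) * (ennreal \<bar>zz / 2\<bar> * (\<integral>\<^sup>+x. ennreal (jbr (0 + (zz / 2) * x) powr (-(2*b))) \<partial>lborel))"
  proof -
    have "ennreal (D / \<bar>zz / 2\<bar>) * ennreal \<bar>zz / 2\<bar> = ennreal D"
      using True D0 by (subst ennreal_mult[symmetric]) auto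
    then show ?thesis by (simp add: mult.assoc[symmetric])
  qed
  also have "ennreal \<bar>zz / 2\<bar> * (\<integral>\<^sup>+x. ennreal (jbr (0 + (zz / 2) * x) powr (-(2*b))) \<partial>lborel) = Ij (2*b)"
    by (rule Ij_affine) (use True in auto)
  also have "ennreal (D / \<bar>zz / 2\<bar>) * Ij (2*b) * Ij (2*b) \<le> ennreal (3 * cHh k b) * Ij (2*b) * Ij (2*b)"
  proof (intro mult_right_mono ennreal_leI)
    have "jbr zz powr (2 * max s 0 - 4*k) \<le> jbr zz powr 1" using sk by (intro powr_mono) (auto simp: jbr_ge1)
    also have "\<dots> = 1 + \<bar>zz\<bar>" by (simp add: jbr_def)
    finally have j: "jbr zz powr (2 * max s 0 - 4*k) \<le> 1 + \<bar>zz\<bar>" .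
    have "D / \<bar>zz / 2\<bar> = cHh k b * (jbr zz powr (2 * max s 0 - 4*k) * 2 / \<bar>zz\<bar>)" unfolding D_def by simp
    also have "\<dots> \<le> cHh k b * ((1 + \<bar>zz\<bar>) * 2 / \<bar>zz\<bar>)"
      using j True by (intro mult_left_mono divide_right_mono mult_right_mono) (auto simp: cHh_def)
    also have "\<dots> \<le> cHh k b * 3"
      using True by (intro mult_left_mono) (auto simp: cHh_def divide_simps)
    finally show "D / \<bar>zz / 2\<bar> \<le> 3 * cHh k b" by simp
  qed auto
  finally show ?thesis by (simp add: mult.assoc)
qed


lemma C_bound:
  assumes a0: "0 \<le> a" and b1: "1 < 2*b" and sk: "2 * max s 0 - 4*k \<le> 1"
  shows "(\<integral>\<^sup>+p. ennreal (Wr s a p * (if SC p (p + r) then Kr2 k b p (p + r) else 0)) \<partial>lborel)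
    \<le> ennreal (3 * cHh k b) * (Ij (2*b) * Ij (2*b))"
proof -
  obtain y u where r: "r = (y, u)" by (cases r)
  let ?H = "\<lambda>p::real\<times>real. (if 2 \<le> \<bar>y\<bar> then cHh k b * jbr y powr (2 * max s 0 - 4*k) * jbr (y * fst p / 2) powr (-2*b) * jbr (snd p - (- (u + (fst p + y)^2/2))) powr (-2*b) else 0)"
  have b0: "0 \<le> b" using b1 by simp
  have pw: "ennreal (Wr s a p * (if SC p (p + r) then Kr2 k b p (p + r) else 0)) \<le> ennreal (?H p)" for p
  proof -
    obtain x t where p: "p = (x, t)" by (cases p)
    have h: "Wr s a p * (if SC p (p + r) then Kr2 k b p (p + r) else 0) \<le> ?H p"
      using C_pw[OF a0 b0, of s x t y u k] unfolding p r by (simp only: fst_conv snd_conv)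
    then show ?thesis by (rule ennreal_leI)
  qed
  have "(\<integral>\<^sup>+p. ennreal (Wr s a p * (if SC p (p + r) then Kr2 k b p (p + r) else 0)) \<partial>lborel)
      \<le> (\<integral>\<^sup>+p. ennreal (?H p) \<partial>lborel)"
    by (rule nn_integral_mono) (rule pw)
  also have "\<dots> \<le> ennreal (3 * cHh k b) * (Ij (2*b) * Ij (2*b))"
    using CHh[where zz=y and ww=y and u=u and k=k, OF b1 sk] by simp
  finally show ?thesis .
qed

definition Kr :: "real \<Rightarrow> real \<Rightarrow> real \<times> real \<Rightarrow> real \<times> real \<Rightarrow> real" where
  "Kr k b p q = jbr (fst q) powr (-k) * jbr (fst q - fst p) powr (-k) * M1 (fst q) (snd q) powr (-b) * M2 (fst p) (snd p) (fst q) (snd q) powr (-b)"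

definition fX :: "real \<Rightarrow> real \<Rightarrow> (real \<times> real \<Rightarrow> complex) \<Rightarrow> real \<times> real \<Rightarrow> real" where
  "fX k b U q = jbr (fst q) powr k * jbr (snd q + (fst q)^2 / 2) powr b * cmod (U q)"

lemma Kr_nn: "0 \<le> Kr k b p q" by (simp add: Kr_def)
lemma fX_nn: "0 \<le> fX k b U q" by (simp add: fX_def)

lemma powr_sq: "((x::real) powr e)^2 = x powr (2 * e)"
proof -
  have "((x::real) powr e)^2 = x powr e * x powr e" by (simp add: power2_eq_square)
  also have "\<dots> = x powr (e + e)" by (simp only: powr_add)
  also have "e + e = 2 * e" by simp
  finally show ?thesis .
qed

lemma Kr_sq: "(Kr k b p q)^2 = Kr2 k b p q"
  unfolding Kr_def Kr2_def by (simp add: power_mult_distrib powr_sq)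

lemma cancel_pw: "0 < (x::real) \<Longrightarrow> x powr e * x powr (-e) = 1"
  by (simp add: powr_add[symmetric])

lemma rearr8: "(A * B * (u::real)) * (C * D * w) * (A' * C' * B' * D') = u * w * ((A * A') * (C * C') * (B * B') * (D * D'))"
  by (simp add: mult_ac)

lemma prod_id: "cmod (U q) * cmod (W (q - p)) = fX k b U q * fX k b W (q - p) * Kr k b p q"
proof -
  let ?J1 = "jbr (fst q)" and ?J2 = "jbr (fst q - fst p)" and ?M1 = "M1 (fst q) (snd q)" and ?M2 = "M2 (fst p) (snd p) (fst q) (snd q)"
  have e1: "jbr (snd q + (fst q)^2 / 2) = ?M1" by (simp add: M1_def)
  have e2: "jbr (snd q - snd p + (fst q - fst p)^2 / 2) = ?M2" by (simp add: M2_def)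
  have "fX k b U q * fX k b W (q - p) * Kr k b p q
     = cmod (U q) * cmod (W (q - p)) * ((?J1 powr k * ?J1 powr (-k)) * (?J2 powr k * ?J2 powr (-k)) * (?M1 powr b * ?M1 powr (-b)) * (?M2 powr b * ?M2 powr (-b)))"
    unfolding fX_def Kr_def fst_diff snd_diff e1 e2 by (rule rearr8)
  also have "\<dots> = cmod (U q) * cmod (W (q - p))"
    by (simp only: cancel_pw[OF jbr_pos] cancel_pw[OF M1_pos] cancel_pw[OF M2_pos] mult_1)
  finally show ?thesis by simp
qed

lemma fst_lb[measurable]: "fst \<in> measurable (lborel :: (real \<times> real) measure) (borel :: real measure)"
proof -
  have "fst \<in> measurable (lborel \<Otimes>\<^sub>M lborel :: (real \<times> real) measure) (lborel :: real measure)" by measurable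
  then show ?thesis by (simp only: lborel_prod measurable_lborel1)
qed
lemma snd_lb[measurable]: "snd \<in> measurable (lborel :: (real \<times> real) measure) (borel :: real measure)"
proof -
  have "snd \<in> measurable (lborel \<Otimes>\<^sub>M lborel :: (real \<times> real) measure) (lborel :: real measure)" by measurable
  then show ?thesis by (simp only: lborel_prod measurable_lborel1)
qed

lemma cover: "SA p q \<or> SB p q \<or> SC p q"
  unfolding SA_def SB_def SC_def by auto

lemma Ksplit: "ennreal (Kr k b p q) \<le> ennreal (if SA p q then Kr k b p q else 0) + ennreal (if SB p q then Kr k b p q else 0) + ennreal (if SC p q then Kr k b p q else 0)"
  using cover[of p q] by (auto simp: add_increasing add_increasing2)

lemma KX_sq: "(ennreal (if S then Kr k b p q else 0))^2 = ennreal (if S then Kr2 k b p q else 0)"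
proof (cases S)
  case True
  have "(ennreal (Kr k b p q))^2 = ennreal ((Kr k b p q)^2)" by (rule ennreal_power[OF Kr_nn])
  then show ?thesis using True by (simp add: Kr_sq)
qed simp

lemma norm_prod_le: "ennreal (cmod (prod_conj_FT U W p)) \<le> (\<integral>\<^sup>+q. ennreal (cmod (U q) * cmod (W (q - p))) \<partial>lborel)"
proof (cases "integrable lborel (\<lambda>q. U q * cnj (W (q - p)))")
  case True
  have "ennreal (cmod (prod_conj_FT U W p)) \<le> (\<integral>\<^sup>+q. ennreal (norm (U q * cnj (W (q - p)))) \<partial>lborel)"
    unfolding prod_conj_FT_def using integral_norm_bound_ennreal[OF True] by simp
  also have "\<dots> = (\<integral>\<^sup>+q. ennreal (cmod (U q) * cmod (W (q - p))) \<partial>lborel)"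
    by (simp add: norm_mult)
  finally show ?thesis .
next
  case False
  then have "prod_conj_FT U W p = 0" unfolding prod_conj_FT_def by (rule not_integrable_integral_eq)
  then show ?thesis by simp
qed

definition CAc :: "real \<Rightarrow> real \<Rightarrow> real \<Rightarrow> ennreal" where
  "CAc k a b = ennreal (2 * cA k a b) * (ennreal (2 powr (2*b)) * (2 * Ij (2*b)) * Ij (2*b) + 2 * (Ij (2*b) * Ij (2*b)))"
definition CBc :: "real \<Rightarrow> real \<Rightarrow> real \<Rightarrow> real \<Rightarrow> ennreal" where
  "CBc k s a b = ennreal (cLo s k * 2 powr (4*a)) * (2 * Ij (2*b)) * (4 * (Ij (1 + 2*a + 4*k) + 2)) + ennreal (3 * cHh k b) * (Ij (2*b) * Ij (2*b))"
definition CCc :: "real \<Rightarrow> real \<Rightarrow> ennreal" where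
  "CCc k b = ennreal (3 * cHh k b) * (Ij (2*b) * Ij (2*b))"

lemma fX_sq: "(ennreal (fX k b U q))^2 = ennreal (jbr (fst q) powr (2 * k) * jbr (snd q + (fst q)^2 / 2) powr (2 * b) * (cmod (U q))^2)"
proof -
  have "(ennreal (fX k b U q))^2 = ennreal ((fX k b U q)^2)" by (rule ennreal_power[OF fX_nn])
  also have "(fX k b U q)^2 = jbr (fst q) powr (2 * k) * jbr (snd q + (fst q)^2 / 2) powr (2 * b) * (cmod (U q))^2"
    unfolding fX_def by (simp add: power_mult_distrib powr_sq)
  finally show ?thesis .
qed

lemma main_bound:
  assumes a0: "0 \<le> a" and a1: "2*a \<le> 1" and ak: "0 < 2*a + 4*k" and b1: "1 < 2*b"
    and se: "2 * s + ek k \<le> 1" and sk: "2 * max s 0 - 4*k \<le> 1"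
    and mU: "U \<in> borel_measurable lborel" and mW: "W \<in> borel_measurable lborel"
  shows "HbHs_sq (-a) s (prod_conj_FT U W) \<le> 3 * (CAc k a b + CBc k s a b + CCc k b) * (Xsb_sq k b U * Xsb_sq k b W)"
proof -
  have mU2[measurable]: "U \<in> borel_measurable (lborel \<Otimes>\<^sub>M lborel)" using mU by (simp only: lborel_prod)
  have mW2[measurable]: "W \<in> borel_measurable (lborel \<Otimes>\<^sub>M lborel)" using mW by (simp only: lborel_prod)
  let ?f = "\<lambda>q. ennreal (fX k b U q)"
  let ?g = "\<lambda>q. ennreal (fX k b W q)"
  let ?w = "\<lambda>p. ennreal (Wr s a p)"
  let ?K = "\<lambda>p q. ennreal (Kr k b p q)"
  let ?KA = "\<lambda>p q. ennreal (if SA p q then Kr k b p q else 0)"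
  let ?KB = "\<lambda>p q. ennreal (if SB p q then Kr k b p q else 0)"
  let ?KC = "\<lambda>p q. ennreal (if SC p q then Kr k b p q else 0)"
  have mf: "?f \<in> borel_measurable borel"
  proof -
    have "?f \<in> borel_measurable (lborel \<Otimes>\<^sub>M lborel)" unfolding fX_def by measurable
    then show ?thesis by (simp only: lborel_prod measurable_lborel2)
  qed
  have mg: "?g \<in> borel_measurable borel"
  proof -
    have "?g \<in> borel_measurable (lborel \<Otimes>\<^sub>M lborel)" unfolding fX_def by measurable
    then show ?thesis by (simp only: lborel_prod measurable_lborel2)
  qed
  have mw: "?w \<in> borel_measurable borel"
  proof -
    have "?w \<in> borel_measurable (lborel \<Otimes>\<^sub>M lborel)" unfolding Wr_def by measurable
    then show ?thesis by (simp only: lborel_prod measurable_lborel2)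
  qed
  have mK: "case_prod ?K \<in> borel_measurable (lborel \<Otimes>\<^sub>M lborel)"
    unfolding Kr_def M1_def M2_def by measurable
  have mKA: "case_prod ?KA \<in> borel_measurable (lborel \<Otimes>\<^sub>M lborel)"
    unfolding Kr_def M1_def M2_def SA_def lo_def domI_def HH_def by measurable
  have mKB: "case_prod ?KB \<in> borel_measurable (lborel \<Otimes>\<^sub>M lborel)"
    unfolding Kr_def M1_def M2_def SB_def lo_def domI_def HH_def by measurable
  have mKC: "case_prod ?KC \<in> borel_measurable (lborel \<Otimes>\<^sub>M lborel)"
    unfolding Kr_def M1_def M2_def SC_def lo_def domI_def HH_def by measurable
  have A: "?w p * (\<integral>\<^sup>+q. (?KA p q)^2 \<partial>lborel) \<le> CAc k a b" for p
    unfolding KX_sq CAc_def using A_bound[OF _ a0 b1 se] ak by simp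
  have B: "(\<integral>\<^sup>+p. ?w p * (?KB p q)^2 \<partial>lborel) \<le> CBc k s a b" for q
  proof -
    have "(\<integral>\<^sup>+p. ?w p * (?KB p q)^2 \<partial>lborel) = (\<integral>\<^sup>+p. ennreal (Wr s a p * (if SB p q then Kr2 k b p q else 0)) \<partial>lborel)"
      unfolding KX_sq by (intro nn_integral_cong) (simp add: ennreal_mult Wr_nn Kr2_nn)
    also have "\<dots> \<le> CBc k s a b" unfolding CBc_def by (rule B_bound[OF a0 a1 ak b1 sk])
    finally show ?thesis .
  qed
  have C: "(\<integral>\<^sup>+p. ?w p * (?KC p (p + r))^2 \<partial>lborel) \<le> CCc k b" for r
  proof -
    have "(\<integral>\<^sup>+p. ?w p * (?KC p (p + r))^2 \<partial>lborel) = (\<integral>\<^sup>+p. ennreal (Wr s a p * (if SC p (p + r) then Kr2 k b p (p + r) else 0)) \<partial>lborel)"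
      unfolding KX_sq by (intro nn_integral_cong) (simp add: ennreal_mult Wr_nn Kr2_nn)
    also have "\<dots> \<le> CCc k b" unfolding CCc_def by (rule C_bound[OF a0 b1 sk])
    finally show ?thesis .
  qed
  have S: "(\<integral>\<^sup>+p. ?w p * (\<integral>\<^sup>+q. ?f q * ?g (q - p) * ?K p q \<partial>lborel)^2 \<partial>lborel)
     \<le> 3 * (CAc k a b + CBc k s a b + CCc k b) * ((\<integral>\<^sup>+q. (?f q)^2 \<partial>lborel) * (\<integral>\<^sup>+q. (?g q)^2 \<partial>lborel))"
    by (rule schur3[OF mf mg mw mK mKA mKB mKC Ksplit A B C])
  have Nf: "(\<integral>\<^sup>+q. (?f q)^2 \<partial>lborel) = Xsb_sq k b U" unfolding Xsb_sq_def fX_sq ..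
  have Ng: "(\<integral>\<^sup>+q. (?g q)^2 \<partial>lborel) = Xsb_sq k b W" unfolding Xsb_sq_def fX_sq ..
  have pw: "ennreal (jbr (fst p) powr (2 * s) * jbr (snd p) powr (2 * - a) * (cmod (prod_conj_FT U W p))^2)
      \<le> ?w p * (\<integral>\<^sup>+q. ?f q * ?g (q - p) * ?K p q \<partial>lborel)^2" for p
  proof -
    have n: "ennreal (cmod (prod_conj_FT U W p)) \<le> (\<integral>\<^sup>+q. ?f q * ?g (q - p) * ?K p q \<partial>lborel)"
    proof -
      have "(\<integral>\<^sup>+q. ennreal (cmod (U q) * cmod (W (q - p))) \<partial>lborel) = (\<integral>\<^sup>+q. ?f q * ?g (q - p) * ?K p q \<partial>lborel)"
      proof (rule nn_integral_cong)
        fix q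
        have "ennreal (cmod (U q) * cmod (W (q - p))) = ennreal (fX k b U q * fX k b W (q - p) * Kr k b p q)"
          by (simp only: prod_id[of U q W p k b])
        also have "\<dots> = ?f q * ?g (q - p) * ?K p q"
          using fX_nn[of k b U q] fX_nn[of k b W "q - p"] Kr_nn[of k b p q]
          by (simp only: ennreal_mult mult_nonneg_nonneg)
        finally show "ennreal (cmod (U q) * cmod (W (q - p))) = ?f q * ?g (q - p) * ?K p q" .
      qed
      then show ?thesis using norm_prod_le[of U W p] by simp
    qed
    have "ennreal (jbr (fst p) powr (2 * s) * jbr (snd p) powr (2 * - a) * (cmod (prod_conj_FT U W p))^2)
        = ?w p * (ennreal (cmod (prod_conj_FT U W p)))^2"
      by (simp add: Wr_def ennreal_mult ennreal_power)
    also have "\<dots> \<le> ?w p * (\<integral>\<^sup>+q. ?f q * ?g (q - p) * ?K p q \<partial>lborel)^2"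
      by (intro mult_left_mono power_mono n) auto
    finally show ?thesis .
  qed
  have "HbHs_sq (-a) s (prod_conj_FT U W) \<le> (\<integral>\<^sup>+p. ?w p * (\<integral>\<^sup>+q. ?f q * ?g (q - p) * ?K p q \<partial>lborel)^2 \<partial>lborel)"
    unfolding HbHs_sq_def by (rule nn_integral_mono) (rule pw)
  also note S
  finally show ?thesis unfolding Nf Ng .
qed

theorem proposition3p3:
  fixes k s b a :: real
  assumes "max 0 s < 2 * k + 1/2" and "s \<le> k + 1/2"
    and "b > 1/2"
    and "max (1/4) (max 0 s - 2 * k) < a" and "a < 1/2"
  shows "\<exists>C. \<forall>U W. in_Xsb k b U \<longrightarrow> in_Xsb k b W \<longrightarrow>
           HbHs_sq (-a) s (prod_conj_FT U W) < \<infinity> \<and>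
           HbHs_norm (-a) s (prod_conj_FT U W) \<le> C * Xsb_norm k b U * Xsb_norm k b W"
proof -
  note h = assms
  have a0: "0 \<le> a" using h(4) by simp
  have a1: "2*a \<le> 1" using h(5) by simp
  have ak: "0 < 2*a + 4*k" using h(4) by (simp add: max_def split: if_splits)
  have b1: "1 < 2*b" using h(3) by simp
  have sk: "2 * max s 0 - 4*k \<le> 1" using h(1) by (simp add: max_def split: if_splits)
  have se: "2 * s + ek k \<le> 1"
  proof (cases "0 \<le> k")
    case True then show ?thesis using h(2) by (simp add: ek_def)
  next
    case False
    have "s < 2 * k + 1/2" using h(1) by (simp add: max_def split: if_splits)
    then show ?thesis using False by (simp add: ek_def)
  qed
  define Ct where "Ct = 3 * (CAc k a b + CBc k s a b + CCc k b)"
  have I1: "Ij (2*b) < \<infinity>" using b1 by (intro Ij_fin)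
  have I2: "Ij (1 + 2*a + 4*k) < \<infinity>" using ak by (intro Ij_fin) simp
  have Ctf: "Ct < \<infinity>"
    unfolding Ct_def CAc_def CBc_def CCc_def using I1 I2
    by (simp add: ennreal_mult_less_top ennreal_add_eq_top ennreal_mult_eq_top_iff less_top)
  show ?thesis
  proof (intro exI allI impI conjI)
    fix U W
    assume U: "in_Xsb k b U" and W: "in_Xsb k b W"
    have mU: "U \<in> borel_measurable lborel" and XU: "Xsb_sq k b U < \<infinity>" using U by (auto simp: in_Xsb_def)
    have mW: "W \<in> borel_measurable lborel" and XW: "Xsb_sq k b W < \<infinity>" using W by (auto simp: in_Xsb_def)
    have mb: "HbHs_sq (-a) s (prod_conj_FT U W) \<le> Ct * (Xsb_sq k b U * Xsb_sq k b W)"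
      unfolding Ct_def by (rule main_bound[OF a0 a1 ak b1 se sk mU mW])
    have fin: "Ct * (Xsb_sq k b U * Xsb_sq k b W) < \<infinity>"
      using Ctf XU XW by (simp add: ennreal_mult_less_top less_top)
    show "HbHs_sq (-a) s (prod_conj_FT U W) < \<infinity>" using mb fin by (rule le_less_trans)
    have "enn2real (HbHs_sq (-a) s (prod_conj_FT U W)) \<le> enn2real (Ct * (Xsb_sq k b U * Xsb_sq k b W))"
      using mb fin by (intro enn2real_mono) (auto simp: less_top)
    also have "\<dots> = enn2real Ct * (enn2real (Xsb_sq k b U) * enn2real (Xsb_sq k b W))"
      by (simp add: enn2real_mult)
    finally have "sqrt (enn2real (HbHs_sq (-a) s (prod_conj_FT U W))) \<le> sqrt (enn2real Ct * (enn2real (Xsb_sq k b U) * enn2real (Xsb_sq k b W)))"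
      by (rule real_sqrt_le_mono)
    also have "\<dots> = sqrt (enn2real Ct) * Xsb_norm k b U * Xsb_norm k b W"
      by (simp add: Xsb_norm_def real_sqrt_mult mult.assoc)
    finally show "HbHs_norm (-a) s (prod_conj_FT U W) \<le> sqrt (enn2real Ct) * Xsb_norm k b U * Xsb_norm k b W"
      unfolding HbHs_norm_def .
  qed
qed

end
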